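(* Let $n\ge2$, let $V$ be a finite-dimensional complex vector space and let $\rho\colon P_{n+1}\to\mathrm{GL}(V)$ be a representation, where $P_{n+1}$ is identified with $F_n\rtimes P_n$ as described in the context. Fix $t_1,\dots,t_n\in\mathbf{C}^*$. Then (i) there is a representation $\rho_{t_1,\dots,t_n}\colon P_{n+1}\to\mathrm{GL}(V)$ with $\rho_{t_1,\dots,t_n}(g_i)=t_i\rho(g_i)$ for $i=1,\dots,n$ and $\rho_{t_1,\dots,t_n}(\beta)=\rho(\beta)$ for all $\beta\in P_n$; and (ii) for every $\beta\in P_n$ all entries of $\phi(\beta)$ lie in $\mathbf{Z}[F_n\rtimes P_n]$, and the map $\rho^+_{t_1,\dots,t_n}\colon P_n\to\mathrm{GL}(V^{\oplus n})$ sending $\beta$ to the block matrix whose $(k,l)$ block is $\rho_{t_1,\dots,t_n}(\phi(\beta)_{kl})$ (with $\rho_{t_1,\dots,t_n}$ extended linearly to the group ring) is a representation of $P_n$. This gives an $n$-parameter family of representations of $P_n$ on $V^{\oplus n}$.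
   Context: The braid group $B_n$ has generators $\sigma_1,\dots,\sigma_{n-1}$ with relations $\sigma_i\sigma_j=\sigma_j\sigma_i$ for $|i-j|>1$ and $\sigma_i\sigma_j\sigma_i=\sigma_j\sigma_i\sigma_j$ for $|i-j|=1$; $P_n\subset B_n$ is the pure braid group. Let $F_n$ be the free group on $g_1,\dots,g_n$. The semidirect product $F_n\rtimes B_n$ is the group generated by $F_n$ and $B_n$ subject to the additional relations $g_{i+1}\sigma_i=\sigma_i g_i$, $g_i\sigma_i=\sigma_i g_i g_{i+1}g_i^{-1}$, and $g_j\sigma_i=\sigma_i g_j$ for $j\notin\{i,i+1\}$; $F_n\rtimes P_n$ denotes its subgroup generated by $F_n$ and $P_n$. For $i=1,\dots,n-1$ let $R_i=\begin{bmatrix}0&g_i\\1&1-g_i\end{bmatrix}$, and let $\phi$ be the homomorphism from $B_n$ to the invertible $n\times n$ matrices over the group ring $\mathbf{Z}[F_n\rtimes B_n]$ given by $\phi(\sigma_i)=\sigma_i\cdot\mathrm{diag}(I_{i-1},R_i,I_{n-i-1})$ (the scalar $\sigma_i$ multiplies each entry on the left). The pure braid group $P_{n+1}$ is identified with $F_n\rtimes P_n$: $P_n\subset P_{n+1}$ as pure braids on the first $n$ strands, and $F_n$ corresponds to the subgroup of $P_{n+1}$ of braids whose first $n$ strands are straight, freely generated by $g_i=(\sigma_n\cdots\sigma_{i+1})\sigma_i^2(\sigma_n\cdots\sigma_{i+1})^{-1}$, $i=1,\dots,n$. *)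

theory Defs
  imports "Jordan_Normal_Form.Matrix" "HOL-Algebra.Generated_Groups"
begin

text \<open>Generators: BG i is g_i (1 \<le> i \<le> n), BS i is sigma_i (1 \<le> i \<le> n-1).
  A letter is a generator with a sign (True = the generator, False = its inverse).\<close>

datatype gen = BG nat | BS nat

type_synonym letter = "gen \<times> bool"
type_synonym word = "letter list"

definition alphabet :: "nat \<Rightarrow> gen set" where
  "alphabet n = {BG i | i. 1 \<le> i \<and> i \<le> n} \<union> {BS i | i. 1 \<le> i \<and> i < n}"

abbreviation P :: "gen \<Rightarrow> letter" where "P x \<equiv> (x, True)"
abbreviation N :: "gen \<Rightarrow> letter" where "N x \<equiv> (x, False)"

definition rels :: "nat \<Rightarrow> (word \<times> word) set" where
  "rels n =
     {([(a, b), (a, \<not> b)], []) | a b. a \<in> alphabet n}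
   \<union> {([P (BS i), P (BS j)], [P (BS j), P (BS i)]) | i j.
        1 \<le> i \<and> i < n \<and> 1 \<le> j \<and> j < n \<and> (i + 1 < j \<or> j + 1 < i)}
   \<union> {([P (BS i), P (BS j), P (BS i)], [P (BS j), P (BS i), P (BS j)]) | i j.
        1 \<le> i \<and> i < n \<and> 1 \<le> j \<and> j < n \<and> (i + 1 = j \<or> j + 1 = i)}
   \<union> {([P (BG (i+1)), P (BS i)], [P (BS i), P (BG i)]) | i. 1 \<le> i \<and> i < n}
   \<union> {([P (BG i), P (BS i)], [P (BS i), P (BG i), P (BG (i+1)), N (BG i)]) | i. 1 \<le> i \<and> i < n}
   \<union> {([P (BG j), P (BS i)], [P (BS i), P (BG j)]) | i j.
        1 \<le> i \<and> i < n \<and> 1 \<le> j \<and> j \<le> n \<and> j \<noteq> i \<and> j \<noteq> i + 1}"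

inductive eqv :: "nat \<Rightarrow> word \<Rightarrow> word \<Rightarrow> bool" for n where
  eqv_refl: "eqv n w w"
| eqv_sym: "eqv n u w \<Longrightarrow> eqv n w u"
| eqv_trans: "eqv n u v \<Longrightarrow> eqv n v w \<Longrightarrow> eqv n u w"
| eqv_rel: "(l, r) \<in> rels n \<Longrightarrow> eqv n (u @ l @ v) (u @ r @ v)"

definition words :: "nat \<Rightarrow> word set" where
  "words n = {w. \<forall>x \<in> set w. fst x \<in> alphabet n}"

definition cls :: "nat \<Rightarrow> word \<Rightarrow> word set" where
  "cls n w = {w'. eqv n w' w}"

definition FB :: "nat \<Rightarrow> word set monoid" where
  "FB n = \<lparr> carrier = cls n ` words n,
            mult = (\<lambda>A B. cls n ((SOME a. a \<in> A) @ (SOME b. b \<in> B))),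
            one = cls n [] \<rparr>"

definition gen_g :: "nat \<Rightarrow> nat \<Rightarrow> word set" where
  "gen_g n i = cls n [P (BG i)]"

fun is_BS :: "gen \<Rightarrow> bool" where
  "is_BS (BS _) = True" | "is_BS (BG _) = False"

fun is_BG :: "gen \<Rightarrow> bool" where
  "is_BG (BG _) = True" | "is_BG (BS _) = False"

definition swp :: "nat \<Rightarrow> nat \<Rightarrow> nat" where
  "swp i k = (if k = i then i + 1 else if k = i + 1 then i else k)"

fun perm_word :: "word \<Rightarrow> nat \<Rightarrow> nat" where
  "perm_word [] = id"
| "perm_word ((BS i, _) # w) = swp i \<circ> perm_word w"
| "perm_word ((BG _, _) # w) = perm_word w"

definition Fn :: "nat \<Rightarrow> word set set" where
  "Fn n = cls n ` {w \<in> words n. \<forall>x \<in> set w. is_BG (fst x)}"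

definition Bn :: "nat \<Rightarrow> word set set" where
  "Bn n = cls n ` {w \<in> words n. \<forall>x \<in> set w. is_BS (fst x)}"

definition Pn :: "nat \<Rightarrow> word set set" where
  "Pn n = cls n ` {w \<in> words n. (\<forall>x \<in> set w. is_BS (fst x)) \<and> perm_word w = id}"

definition FP :: "nat \<Rightarrow> word set set" where
  "FP n = generate (FB n) (Fn n \<union> Pn n)"

definition FPgroup :: "nat \<Rightarrow> word set monoid" where
  "FPgroup n = (FB n)\<lparr>carrier := FP n\<rparr>"

definition Pgroup :: "nat \<Rightarrow> word set monoid" where
  "Pgroup n = (FB n)\<lparr>carrier := Pn n\<rparr>"

definition GL :: "nat \<Rightarrow> complex mat monoid" where
  "GL d = \<lparr> carrier = {A. A \<in> carrier_mat d d \<and> invertible_mat A},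
            mult = (*), one = 1\<^sub>m d \<rparr>"

text \<open>Group ring elements: finitely supported functions from group elements to integers.\<close>
type_synonym gring = "word set \<Rightarrow> int"

definition supp :: "gring \<Rightarrow> word set set" where
  "supp a = {x. a x \<noteq> 0}"

definition delta :: "word set \<Rightarrow> gring" where
  "delta x = (\<lambda>y. if y = x then 1 else 0)"

definition gr_mult :: "nat \<Rightarrow> gring \<Rightarrow> gring \<Rightarrow> gring" where
  "gr_mult n a b = (\<lambda>x. \<Sum>y \<in> supp a. \<Sum>z \<in> supp b.
      if y \<otimes>\<^bsub>FB n\<^esub> z = x then a y * b z else 0)"

definition in_ZFP :: "nat \<Rightarrow> gring \<Rightarrow> bool" where
  "in_ZFP n a \<longleftrightarrow> finite (supp a) \<and> supp a \<subseteq> FP n"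

text \<open>n x n matrices over the group ring, indices 1..n.\<close>
type_synonym gmat = "nat \<Rightarrow> nat \<Rightarrow> gring"

definition gmat_mult :: "nat \<Rightarrow> gmat \<Rightarrow> gmat \<Rightarrow> gmat" where
  "gmat_mult n A B = (\<lambda>k l x. \<Sum>m \<in> {1..n}. gr_mult n (A k m) (B m l) x)"

definition gmat_one :: "nat \<Rightarrow> gmat" where
  "gmat_one n = (\<lambda>k l. if k = l then delta (one (FB n)) else (\<lambda>_. 0))"

text \<open>diag(I_{i-1}, R_i, I_{n-i-1}) with R_i = [[0, g_i], [1, 1 - g_i]].\<close>
definition Dmat :: "nat \<Rightarrow> nat \<Rightarrow> gmat" where
  "Dmat n i = (\<lambda>k l.
     if k = i \<and> l = i then (\<lambda>_. 0)
     else if k = i \<and> l = i + 1 then delta (gen_g n i)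
     else if k = i + 1 \<and> l = i then delta (one (FB n))
     else if k = i + 1 \<and> l = i + 1 then (\<lambda>x. delta (one (FB n)) x - delta (gen_g n i) x)
     else if k = l then delta (one (FB n)) else (\<lambda>_. 0))"

text \<open>Its inverse diag(I_{i-1}, R_i^{-1}, I_{n-i-1}) with
  R_i^{-1} = [[1 - g_i^{-1}, 1], [g_i^{-1}, 0]].\<close>
definition Dinv :: "nat \<Rightarrow> nat \<Rightarrow> gmat" where
  "Dinv n i = (\<lambda>k l.
     if k = i \<and> l = i then (\<lambda>x. delta (one (FB n)) x - delta (cls n [N (BG i)]) x)
     else if k = i \<and> l = i + 1 then delta (one (FB n))
     else if k = i + 1 \<and> l = i then delta (cls n [N (BG i)])
     else if k = i + 1 \<and> l = i + 1 then (\<lambda>_. 0)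
     else if k = l then delta (one (FB n)) else (\<lambda>_. 0))"

text \<open>phi(sigma_i) = sigma_i . D_i (scalar on the left); phi(sigma_i^{-1}) = phi(sigma_i)^{-1}
  = D_i^{-1} . sigma_i^{-1}.\<close>
fun phi_letter :: "nat \<Rightarrow> letter \<Rightarrow> gmat" where
  "phi_letter n (BS i, True) = (\<lambda>k l. gr_mult n (delta (cls n [P (BS i)])) (Dmat n i k l))"
| "phi_letter n (BS i, False) = (\<lambda>k l. gr_mult n (Dinv n i k l) (delta (cls n [N (BS i)])))"
| "phi_letter n (BG i, b) = gmat_one n"

fun phi_word :: "nat \<Rightarrow> word \<Rightarrow> gmat" where
  "phi_word n [] = gmat_one n"
| "phi_word n (x # w) = gmat_mult n (phi_letter n x) (phi_word n w)"

definition phi :: "nat \<Rightarrow> word set \<Rightarrow> gmat" where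
  "phi n \<beta> = phi_word n (SOME w. w \<in> \<beta> \<and> w \<in> words n \<and> (\<forall>x \<in> set w. is_BS (fst x)))"

definition rho_lin :: "nat \<Rightarrow> (word set \<Rightarrow> complex mat) \<Rightarrow> gring \<Rightarrow> complex mat" where
  "rho_lin d r a = mat d d (\<lambda>(p, q). \<Sum>x \<in> supp a. of_int (a x) * (r x $$ (p, q)))"

text \<open>rho^+(beta): block matrix on V^{n} whose (k,l) block is r(phi(beta)_{kl}).\<close>
definition rho_plus :: "nat \<Rightarrow> nat \<Rightarrow> (word set \<Rightarrow> complex mat) \<Rightarrow> word set \<Rightarrow> complex mat" where
  "rho_plus n d r \<beta> = mat (n * d) (n * d)
     (\<lambda>(a, b). rho_lin d r (phi n \<beta> (a div d + 1) (b div d + 1)) $$ (a mod d, b mod d))"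

definition twisted :: "nat \<Rightarrow> nat \<Rightarrow> (word set \<Rightarrow> complex mat) \<Rightarrow> (nat \<Rightarrow> complex)
    \<Rightarrow> (word set \<Rightarrow> complex mat) \<Rightarrow> bool" where
  "twisted n d \<rho> t \<rho>t \<longleftrightarrow> \<rho>t \<in> hom (FPgroup n) (GL d)
     \<and> (\<forall>i \<in> {1..n}. \<rho>t (gen_g n i) = t i \<cdot>\<^sub>m \<rho> (gen_g n i))
     \<and> (\<forall>\<beta> \<in> Pn n. \<rho>t \<beta> = \<rho> \<beta>)"

end

theory Submission
  imports Defs
begin


declare eqv_trans[trans]

lemma eqv_appR: "eqv n u u' \<Longrightarrow> eqv n (u @ v) (u' @ v)"
proof (induction rule: eqv.induct)
  case (eqv_rel l r a b)
  then show ?case using eqv.eqv_rel[of l r n a "b @ v"] by simp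
qed (auto intro: eqv.intros)

lemma eqv_appL: "eqv n v v' \<Longrightarrow> eqv n (u @ v) (u @ v')"
proof (induction rule: eqv.induct)
  case (eqv_rel l r a b)
  then show ?case using eqv.eqv_rel[of l r n "u @ a" b] by simp
qed (auto intro: eqv.intros)

lemma eqv_app: "eqv n u u' \<Longrightarrow> eqv n v v' \<Longrightarrow> eqv n (u @ v) (u' @ v')"
  by (meson eqv_appL eqv_appR eqv_trans)

lemma eqv_ctx: "eqv n l r \<Longrightarrow> eqv n (a @ l @ b) (a @ r @ b)"
  by (simp add: eqv_app eqv_refl)

lemma eqv_Cons: "eqv n l r \<Longrightarrow> eqv n (x # l) (x # r)"
  using eqv_appL[of n l r "[x]"] by simp

lemma rel_eqv: "(l, r) \<in> rels n \<Longrightarrow> eqv n l r"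
  using eqv_rel[of l r n "[]" "[]"] by simp

lemma cls_eq_iff: "cls n u = cls n w \<longleftrightarrow> eqv n u w"
proof
  assume "cls n u = cls n w"
  then have "u \<in> cls n w" unfolding cls_def using eqv_refl[of n u] by blast
  then show "eqv n u w" unfolding cls_def by simp
next
  assume "eqv n u w"
  then show "cls n u = cls n w" unfolding cls_def
    by (auto intro: eqv_trans eqv_sym)
qed

lemma cls_mem: "w \<in> cls n w" unfolding cls_def by (simp add: eqv_refl)

lemma some_cls: "eqv n (SOME a. a \<in> cls n w) w"
proof -
  have "(SOME a. a \<in> cls n w) \<in> cls n w" by (rule someI, rule cls_mem)
  then show ?thesis unfolding cls_def by simp
qed

lemma FB_mult: "cls n u \<otimes>\<^bsub>FB n\<^esub> cls n v = cls n (u @ v)"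
  unfolding FB_def using some_cls[of n u] some_cls[of n v]
  by (simp add: cls_eq_iff eqv_app)

lemma FB_one: "\<one>\<^bsub>FB n\<^esub> = cls n []" unfolding FB_def by simp

lemma FB_carrier: "carrier (FB n) = cls n ` words n" unfolding FB_def by simp

lemma words_app[simp]: "u @ v \<in> words n \<longleftrightarrow> u \<in> words n \<and> v \<in> words n"
  unfolding words_def by auto

lemma words_Cons[simp]: "x # v \<in> words n \<longleftrightarrow> fst x \<in> alphabet n \<and> v \<in> words n"
  unfolding words_def by auto

lemma words_Nil[simp]: "[] \<in> words n"
  unfolding words_def by auto

definition winv :: "word \<Rightarrow> word" where
  "winv w = rev (map (\<lambda>(a, b). (a, \<not> b)) w)"

lemma winv_simps[simp]: "winv [] = []" "winv (x # w) = winv w @ [(fst x, \<not> snd x)]"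
  "winv (u @ v) = winv v @ winv u"
  unfolding winv_def by (auto simp: case_prod_beta)

lemma winv_words[simp]: "winv w \<in> words n \<longleftrightarrow> w \<in> words n"
  by (induction w) auto

lemma winv_winv[simp]: "winv (winv w) = w"
  by (induction w) auto

lemma cancel1: "fst x \<in> alphabet n \<Longrightarrow> eqv n [x, (fst x, \<not> snd x)] []"
  using rel_eqv[of "[x, (fst x, \<not> snd x)]" "[]" n] unfolding rels_def
  by (cases x) auto

lemma cancel2: "fst x \<in> alphabet n \<Longrightarrow> eqv n [(fst x, \<not> snd x), x] []"
  using cancel1[of "(fst x, \<not> snd x)" n] by simp

lemma winv_right: "w \<in> words n \<Longrightarrow> eqv n (w @ winv w) []"
proof (induction w)
  case Nil then show ?case by (simp add: eqv_refl)
next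
  case (Cons x w)
  have "eqv n (x # w @ winv w @ [(fst x, \<not> snd x)]) ([x] @ [] @ [(fst x, \<not> snd x)])"
    using Cons eqv_ctx[of n "w @ winv w" "[]" "[x]" "[(fst x, \<not> snd x)]"] by simp
  also have "eqv n ([x] @ [] @ [(fst x, \<not> snd x)]) []" using cancel1[of x n] Cons by simp
  finally show ?case by simp
qed

lemma winv_left: "w \<in> words n \<Longrightarrow> eqv n (winv w @ w) []"
  using winv_right[of "winv w" n] by simp

lemma FB_group: "group (FB n)"
proof (rule groupI)
  fix x y assume "x \<in> carrier (FB n)" "y \<in> carrier (FB n)"
  then show "x \<otimes>\<^bsub>FB n\<^esub> y \<in> carrier (FB n)"
    by (auto simp: FB_carrier FB_mult)
next
  show "\<one>\<^bsub>FB n\<^esub> \<in> carrier (FB n)" by (auto simp: FB_carrier FB_one)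
next
  fix x y z assume "x \<in> carrier (FB n)" "y \<in> carrier (FB n)" "z \<in> carrier (FB n)"
  then show "x \<otimes>\<^bsub>FB n\<^esub> y \<otimes>\<^bsub>FB n\<^esub> z = x \<otimes>\<^bsub>FB n\<^esub> (y \<otimes>\<^bsub>FB n\<^esub> z)"
    by (auto simp: FB_carrier FB_mult)
next
  fix x assume "x \<in> carrier (FB n)"
  then show "\<one>\<^bsub>FB n\<^esub> \<otimes>\<^bsub>FB n\<^esub> x = x"
    by (auto simp: FB_carrier FB_mult FB_one)
next
  fix x assume "x \<in> carrier (FB n)"
  then obtain w where w: "w \<in> words n" "x = cls n w" by (auto simp: FB_carrier)
  show "\<exists>y\<in>carrier (FB n). y \<otimes>\<^bsub>FB n\<^esub> x = \<one>\<^bsub>FB n\<^esub>"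
    using w winv_left[of w n]
    by (intro bexI[where x="cls n (winv w)"]) (auto simp: FB_carrier FB_mult FB_one cls_eq_iff)
qed

lemma FB_inv: "w \<in> words n \<Longrightarrow> inv\<^bsub>FB n\<^esub> (cls n w) = cls n (winv w)"
  using winv_left[of w n]
  by (intro group.inv_equality[OF FB_group]) (auto simp: FB_carrier FB_mult FB_one cls_eq_iff)


lemma perm_word_app: "perm_word (u @ v) = perm_word u \<circ> perm_word v"
proof (induction u)
  case (Cons x u) then show ?case by (cases x; cases "fst x") auto
qed simp

lemma swp_swp: "swp i \<circ> swp i = id" by (auto simp: swp_def fun_eq_iff)
lemma swp_comm: "i + 1 < j \<or> j + 1 < i \<Longrightarrow> swp i \<circ> swp j = swp j \<circ> swp i"
  by (auto simp: swp_def fun_eq_iff)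
lemma swp_braid: "j = i + 1 \<or> i = j + 1 \<Longrightarrow> swp i \<circ> swp j \<circ> swp i = swp j \<circ> swp i \<circ> swp j"
  by (auto simp: swp_def fun_eq_iff)

lemma perm_cancel: "perm_word [(a, b), (a, \<not> b)] = id"
  by (cases a) (auto simp: swp_def fun_eq_iff)

lemma perm_comm: "i + 1 < j \<or> j + 1 < i \<Longrightarrow>
  perm_word [(BS i, b), (BS j, c)] = perm_word [(BS j, c), (BS i, b)]"
  by (auto simp: swp_def fun_eq_iff)

lemma perm_braid: "j = i + 1 \<or> i = j + 1 \<Longrightarrow>
  perm_word [(BS i, b), (BS j, c), (BS i, b)] = perm_word [(BS j, c), (BS i, b), (BS j, c)]"
  by (auto simp: swp_def fun_eq_iff)

lemma rels_perm: "(l, r) \<in> rels n \<Longrightarrow> perm_word l = perm_word r"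
  unfolding rels_def
  apply (elim UnE)
  subgoal by (auto simp: perm_cancel)
  subgoal by (auto simp: swp_def fun_eq_iff)
  subgoal by (auto simp: swp_def fun_eq_iff)
  by auto

lemma rels_words: "(l, r) \<in> rels n \<Longrightarrow> l \<in> words n \<and> r \<in> words n"
  unfolding rels_def by (elim UnE) (auto simp: alphabet_def)

lemma eqv_perm: "eqv n u w \<Longrightarrow> perm_word u = perm_word w"
  by (induction rule: eqv.induct) (auto simp: perm_word_app rels_perm)

lemma eqv_words: "eqv n u w \<Longrightarrow> u \<in> words n \<longleftrightarrow> w \<in> words n"
  by (induction rule: eqv.induct) (use rels_words in auto)

fun chi :: "(nat \<Rightarrow> complex) \<Rightarrow> word \<Rightarrow> complex" where
  "chi t [] = 1"
| "chi t ((BS i, b) # w) = chi (t \<circ> swp i) w"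
| "chi t ((BG j, b) # w) = (if b then t j else inverse (t j)) * chi t w"

lemma chi_app: "chi t (u @ v) = chi t u * chi (t \<circ> perm_word u) v"
proof (induction u arbitrary: t)
  case (Cons x u) then show ?case by (cases x; cases "fst x") (auto simp: comp_def)
qed simp

lemma chi_BS: "\<forall>x \<in> set w. is_BS (fst x) \<Longrightarrow> chi t w = 1"
proof (induction w arbitrary: t)
  case (Cons x w) then show ?case by (cases x; cases "fst x") auto
qed simp

lemma chi_nz: "\<forall>j. t j \<noteq> 0 \<Longrightarrow> chi t w \<noteq> 0"
proof (induction w arbitrary: t)
  case (Cons x w) then show ?case by (cases x; cases "fst x") auto
qed simp

lemma chi_cancel: "\<forall>j. t j \<noteq> 0 \<Longrightarrow> chi t [(a, b), (a, \<not> b)] = 1"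
  by (cases a) auto

lemma rels_chi: "(l, r) \<in> rels n \<Longrightarrow> \<forall>j. t j \<noteq> 0 \<Longrightarrow> chi t l = chi t r"
  unfolding rels_def
  apply (elim UnE)
  subgoal by (auto simp: chi_cancel)
  subgoal by auto
  subgoal by auto
  subgoal by (auto simp: swp_def)
  subgoal by (auto simp: swp_def)
  by (auto simp: swp_def)

lemma eqv_chi: "eqv n u w \<Longrightarrow> \<forall>j. t j \<noteq> 0 \<Longrightarrow> chi t u = chi t w"
proof (induction arbitrary: t rule: eqv.induct)
  case (eqv_rel l r u v)
  then show ?case using rels_chi[OF eqv_rel(1), of "t \<circ> perm_word u"] rels_perm[OF eqv_rel(1)]
    by (simp add: chi_app perm_word_app)
qed auto


abbreviation isBGw :: "word \<Rightarrow> bool" where "isBGw w \<equiv> \<forall>x \<in> set w. is_BG (fst x)"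
abbreviation isBSw :: "word \<Rightarrow> bool" where "isBSw w \<equiv> \<forall>x \<in> set w. is_BS (fst x)"

lemma perm_BG: "isBGw w \<Longrightarrow> perm_word w = id"
proof (induction w)
  case (Cons x w) then show ?case by (cases x; cases "fst x") auto
qed simp

lemma winv_BG[simp]: "isBGw (winv f) = isBGw f" by (induction f) auto
lemma winv_BS[simp]: "isBSw (winv f) = isBSw f" by (induction f) auto

lemma step: "eqv n l r \<Longrightarrow> U = a @ l @ b \<Longrightarrow> W = a @ r @ b \<Longrightarrow> eqv n U W"
  using eqv_ctx by blast

lemma R_comm_g: "1 \<le> i \<Longrightarrow> i < n \<Longrightarrow> 1 \<le> j \<Longrightarrow> j \<le> n \<Longrightarrow> j \<noteq> i \<Longrightarrow> j \<noteq> i + 1 \<Longrightarrow>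
  eqv n [P (BG j), P (BS i)] [P (BS i), P (BG j)]"
  by (rule rel_eqv) (unfold rels_def, blast)
lemma R_g1: "1 \<le> i \<Longrightarrow> i < n \<Longrightarrow> eqv n [P (BG (i+1)), P (BS i)] [P (BS i), P (BG i)]"
  by (rule rel_eqv) (unfold rels_def, blast)
lemma R_g0: "1 \<le> i \<Longrightarrow> i < n \<Longrightarrow>
  eqv n [P (BG i), P (BS i)] [P (BS i), P (BG i), P (BG (i+1)), N (BG i)]"
  by (rule rel_eqv) (unfold rels_def, blast)

lemma inv_push:
  assumes "eqv n [x, y] (y # f)" "fst x \<in> alphabet n" "f \<in> words n"
  shows "eqv n [(fst x, \<not> snd x), y] (y # winv f)"
proof -
  let ?x = "(fst x, \<not> snd x)"
  have "eqv n ([?x, y] @ []) ([?x, y] @ f @ winv f)"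
    using winv_right[OF assms(3)] by (intro eqv_appL, rule eqv_sym)
  also have "eqv n ([?x, y] @ f @ winv f) ([?x] @ [x, y] @ winv f)"
    by (rule step[OF eqv_sym[OF assms(1)], of _ "[?x]" "winv f"]) auto
  also have "eqv n ([?x] @ [x, y] @ winv f) ([] @ [] @ (y # winv f))"
    by (rule step[OF cancel2[of x n], of _ "[]" "y # winv f"]) (use assms in auto)
  finally show ?thesis by simp
qed

lemma inv_conj:
  assumes "eqv n (f @ [y]) [y, x]" "fst x \<in> alphabet n" "f \<in> words n"
  shows "eqv n (winv f @ [y]) [y, (fst x, \<not> snd x)]"
proof -
  let ?x = "(fst x, \<not> snd x)"
  have "eqv n ((winv f @ [y]) @ []) ((winv f @ [y]) @ [x, ?x])"
    by (rule eqv_appL[OF eqv_sym[OF cancel1]]) (use assms in simp)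
  also have "eqv n ((winv f @ [y]) @ [x, ?x]) (winv f @ (f @ [y]) @ [?x])"
    by (rule step[OF eqv_sym[OF assms(1)], of _ "winv f" "[?x]"]) auto
  also have "eqv n (winv f @ (f @ [y]) @ [?x]) ([] @ [] @ [y, ?x])"
    by (rule step[OF winv_left[of f n], of _ "[]" "[y, ?x]"]) (use assms in auto)
  finally show ?thesis by simp
qed

lemma alph_BG: "1 \<le> j \<Longrightarrow> j \<le> n \<Longrightarrow> BG j \<in> alphabet n" by (auto simp: alphabet_def)
lemma alph_BS: "1 \<le> j \<Longrightarrow> j < n \<Longrightarrow> BS j \<in> alphabet n" by (auto simp: alphabet_def)
lemma alph_iff: "BG j \<in> alphabet n \<longleftrightarrow> 1 \<le> j \<and> j \<le> n" "BS j \<in> alphabet n \<longleftrightarrow> 1 \<le> j \<and> j < n"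
  by (auto simp: alphabet_def)

lemma push_pos_P:
  assumes "1 \<le> i" "i < n" "1 \<le> j" "j \<le> n"
  shows "\<exists>f. isBGw f \<and> f \<in> words n \<and> eqv n [P (BG j), P (BS i)] (P (BS i) # f)"
proof -
  consider "j = i" | "j = i + 1" | "j \<noteq> i \<and> j \<noteq> i + 1" by blast
  then show ?thesis
  proof cases
    case 1 then show ?thesis using R_g0[OF assms(1,2)] assms
      by (intro exI[where x="[P (BG i), P (BG (i+1)), N (BG i)]"]) (auto simp: alph_iff)
  next
    case 2 then show ?thesis using R_g1[OF assms(1,2)] assms
      by (intro exI[where x="[P (BG i)]"]) (auto simp: alph_iff)
  next
    case 3 then show ?thesis using R_comm_g[OF assms] assms
      by (intro exI[where x="[P (BG j)]"]) (auto simp: alph_iff)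
  qed
qed

lemma push_pos:
  assumes "1 \<le> i" "i < n" "1 \<le> j" "j \<le> n"
  shows "\<exists>f. isBGw f \<and> f \<in> words n \<and> eqv n [(BG j, b), P (BS i)] (P (BS i) # f)"
proof (cases b)
  case True then show ?thesis using push_pos_P[OF assms] by simp
next
  case False
  obtain f where f: "isBGw f" "f \<in> words n" "eqv n [P (BG j), P (BS i)] (P (BS i) # f)"
    using push_pos_P[OF assms] by blast
  have "eqv n [(BG j, False), P (BS i)] (P (BS i) # winv f)"
    using inv_push[OF f(3)] f assms by (simp add: alph_iff)
  then show ?thesis using f False by (intro exI[where x="winv f"]) simp
qed

lemma conj_P:
  assumes "1 \<le> i" "i < n" "1 \<le> j" "j \<le> n"
  shows "\<exists>f. isBGw f \<and> f \<in> words n \<and> eqv n (f @ [P (BS i)]) [P (BS i), P (BG j)]"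
proof -
  consider "j = i" | "j = i + 1" | "j \<noteq> i \<and> j \<noteq> i + 1" by blast
  then show ?thesis
  proof cases
    case 1 then show ?thesis using R_g1[OF assms(1,2)] assms
      by (intro exI[where x="[P (BG (i+1))]"]) (auto simp: alph_iff)
  next
    case 2
    let ?f = "[N (BG (i+1)), P (BG i), P (BG (i+1))]"
    have a1: "eqv n [N (BG (i+1)), P (BS i)] [P (BS i), N (BG i)]"
      using inv_push[OF R_g1[OF assms(1,2)]] assms by (simp add: alph_iff)
    have "eqv n (?f @ [P (BS i)]) ([N (BG (i+1)), P (BG i)] @ [P (BS i), P (BG i)] @ [])"
      by (rule step[OF R_g1[OF assms(1,2)], of _ "[N (BG (i+1)), P (BG i)]" "[]"]) auto
    also have "eqv n ([N (BG (i+1)), P (BG i)] @ [P (BS i), P (BG i)] @ [])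
      ([N (BG (i+1))] @ [P (BS i), P (BG i), P (BG (i+1)), N (BG i)] @ [P (BG i)])"
      by (rule step[OF R_g0[OF assms(1,2)], of _ "[N (BG (i+1))]" "[P (BG i)]"]) auto
    also have "eqv n ([N (BG (i+1))] @ [P (BS i), P (BG i), P (BG (i+1)), N (BG i)] @ [P (BG i)])
      ([N (BG (i+1)), P (BS i), P (BG i), P (BG (i+1))] @ [] @ [])"
      by (rule step[OF cancel1[of "N (BG i)" n], of _ "[N (BG (i+1)), P (BS i), P (BG i), P (BG (i+1))]" "[]"]) (use assms in \<open>auto simp: alph_iff\<close>)
    also have "eqv n ([N (BG (i+1)), P (BS i), P (BG i), P (BG (i+1))] @ [] @ [])
      ([] @ [P (BS i), N (BG i)] @ [P (BG i), P (BG (i+1))])"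
      by (rule step[OF a1, of _ "[]" "[P (BG i), P (BG (i+1))]"]) auto
    also have "eqv n ([] @ [P (BS i), N (BG i)] @ [P (BG i), P (BG (i+1))])
      ([P (BS i)] @ [] @ [P (BG (i+1))])"
      by (rule step[OF cancel1[of "N (BG i)" n], of _ "[P (BS i)]" "[P (BG (i+1))]"]) (use assms in \<open>auto simp: alph_iff\<close>)
    finally show ?thesis using 2 assms by (intro exI[where x="?f"]) (auto simp: alph_iff)
  next
    case 3 then show ?thesis using R_comm_g[OF assms] assms
      by (intro exI[where x="[P (BG j)]"]) (auto simp: alph_iff)
  qed
qed

lemma conj_any:
  assumes "1 \<le> i" "i < n" "1 \<le> j" "j \<le> n"
  shows "\<exists>f. isBGw f \<and> f \<in> words n \<and> eqv n (f @ [P (BS i)]) [P (BS i), (BG j, b)]"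
proof (cases b)
  case True then show ?thesis using conj_P[OF assms] by simp
next
  case False
  obtain f where f: "isBGw f" "f \<in> words n" "eqv n (f @ [P (BS i)]) [P (BS i), P (BG j)]"
    using conj_P[OF assms] by blast
  have "eqv n (winv f @ [P (BS i)]) [P (BS i), (BG j, False)]"
    using inv_conj[OF f(3)] f assms by (simp add: alph_iff)
  then show ?thesis using f False by (intro exI[where x="winv f"]) simp
qed

lemma push_neg:
  assumes "1 \<le> i" "i < n" "1 \<le> j" "j \<le> n"
  shows "\<exists>f. isBGw f \<and> f \<in> words n \<and> eqv n [(BG j, b), N (BS i)] (N (BS i) # f)"
proof -
  obtain f where f: "isBGw f" "f \<in> words n" "eqv n (f @ [P (BS i)]) [P (BS i), (BG j, b)]"
    using conj_any[OF assms] by blast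
  have "eqv n ([] @ [] @ [(BG j, b), N (BS i)]) ([] @ [N (BS i), P (BS i)] @ [(BG j, b), N (BS i)])"
    by (rule step[OF eqv_sym[OF cancel2[of "P (BS i)" n]]]) (use assms in \<open>auto simp: alph_iff\<close>)
  also have "eqv n ([] @ [N (BS i), P (BS i)] @ [(BG j, b), N (BS i)]) ([N (BS i)] @ (f @ [P (BS i)]) @ [N (BS i)])"
    by (rule step[OF eqv_sym[OF f(3)], of _ "[N (BS i)]" "[N (BS i)]"]) auto
  also have "eqv n ([N (BS i)] @ (f @ [P (BS i)]) @ [N (BS i)]) ((N (BS i) # f) @ [] @ [])"
    by (rule step[OF cancel1[of "P (BS i)" n], of _ "N (BS i) # f" "[]"]) (use assms in \<open>auto simp: alph_iff\<close>)
  finally show ?thesis using f by auto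
qed

lemma push_letter:
  assumes "fst x \<in> alphabet n" "is_BG (fst x)" "fst y \<in> alphabet n" "is_BS (fst y)"
  shows "\<exists>f. isBGw f \<and> f \<in> words n \<and> eqv n [x, y] (y # f)"
proof -
  obtain j b where x: "x = (BG j, b)" using assms(2) by (cases x; cases "fst x") auto
  obtain i c where y: "y = (BS i, c)" using assms(4) by (cases y; cases "fst y") auto
  have ij: "1 \<le> i" "i < n" "1 \<le> j" "j \<le> n" using assms unfolding x y by (auto simp: alph_iff)
  show ?thesis
  proof (cases c)
    case True then show ?thesis using push_pos[OF ij, of b] unfolding x y by simp
  next
    case False then show ?thesis using push_neg[OF ij, of b] unfolding x y by simp
  qed
qed

lemma push_word1:
  assumes "isBGw f" "f \<in> words n" "fst y \<in> alphabet n" "is_BS (fst y)"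
  shows "\<exists>f'. isBGw f' \<and> f' \<in> words n \<and> eqv n (f @ [y]) (y # f')"
  using assms
proof (induction f)
  case Nil then show ?case by (intro exI[where x="[]"]) (auto intro: eqv_refl)
next
  case (Cons x f)
  then obtain f1 where f1: "isBGw f1" "f1 \<in> words n" "eqv n (f @ [y]) (y # f1)" by auto
  obtain f2 where f2: "isBGw f2" "f2 \<in> words n" "eqv n [x, y] (y # f2)"
    using push_letter[of x n y] Cons.prems by auto
  have "eqv n ((x # f) @ [y]) ([x] @ (y # f1) @ [])"
    by (rule step[OF f1(3), of _ "[x]" "[]"]) auto
  also have "eqv n ([x] @ (y # f1) @ []) ([] @ (y # f2) @ f1)"
    by (rule step[OF f2(3), of _ "[]" f1]) auto
  finally show ?case using f1 f2 by (intro exI[where x="f2 @ f1"]) auto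
qed

lemma push_word:
  assumes "isBSw s" "s \<in> words n"
  shows "isBGw f \<Longrightarrow> f \<in> words n \<Longrightarrow> \<exists>f'. isBGw f' \<and> f' \<in> words n \<and> eqv n (f @ s) (s @ f')"
  using assms
proof (induction s arbitrary: f)
  case Nil then show ?case by (intro exI[where x=f]) (auto intro: eqv_refl)
next
  case (Cons y s)
  obtain f1 where f1: "isBGw f1" "f1 \<in> words n" "eqv n (f @ [y]) (y # f1)"
    using push_word1[of f n y] Cons.prems by auto
  obtain f2 where f2: "isBGw f2" "f2 \<in> words n" "eqv n (f1 @ s) (s @ f2)"
    using Cons.IH[of f1] Cons.prems f1 by auto
  have "eqv n (f @ y # s) ([] @ (y # f1) @ s)"
    by (rule step[OF f1(3), of _ "[]" s]) auto
  also have "eqv n ([] @ (y # f1) @ s) ([y] @ (s @ f2) @ [])"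
    by (rule step[OF f2(3), of _ "[y]" "[]"]) auto
  finally show ?case using f2 by (intro exI[where x=f2]) auto
qed

lemma normal_form:
  "u \<in> words n \<Longrightarrow> \<exists>s f. isBSw s \<and> s \<in> words n \<and> isBGw f \<and> f \<in> words n \<and> eqv n u (s @ f)"
proof (induction u)
  case Nil
  have "isBSw [] \<and> [] \<in> words n \<and> isBGw [] \<and> [] \<in> words n \<and> eqv n [] ([] @ [])"
    by (simp add: eqv_refl)
  then show ?case by blast
next
  case (Cons x u)
  have xa: "fst x \<in> alphabet n" "u \<in> words n" using Cons.prems by auto
  obtain s f where sf: "isBSw s" "s \<in> words n" "isBGw f" "f \<in> words n" "eqv n u (s @ f)"
    using Cons.IH[OF xa(2)] by blast
  have ex: "eqv n (x # u) (x # s @ f)" using eqv_Cons[OF sf(5)] .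
  show ?case
  proof (cases "is_BS (fst x)")
    case True
    have "isBSw (x # s) \<and> x # s \<in> words n \<and> isBGw f \<and> f \<in> words n \<and> eqv n (x # u) ((x # s) @ f)"
      using ex sf xa True by simp
    then show ?thesis by blast
  next
    case False
    then have bg: "is_BG (fst x)" by (cases "fst x") auto
    have xw: "isBGw [x]" "[x] \<in> words n" using bg xa by auto
    obtain f1 where f1: "isBGw f1" "f1 \<in> words n" "eqv n ([x] @ s) (s @ f1)"
      using push_word[OF sf(1,2) xw] by blast
    have "eqv n (x # s @ f) (s @ f1 @ f)"
      using step[OF f1(3), of "x # s @ f" "[]" f] by simp
    then have e: "eqv n (x # u) (s @ (f1 @ f))" by (rule eqv_trans[OF ex])
    have "isBSw s \<and> s \<in> words n \<and> isBGw (f1 @ f) \<and> f1 @ f \<in> words n \<and> eqv n (x # u) (s @ (f1 @ f))"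
      using e sf(1,2,3,4) f1(1,2) by (simp add: ball_Un)
    then show ?thesis by blast
  qed
qed

lemma perm_words_eq: "eqv n u w \<Longrightarrow> perm_word u = perm_word w" by (rule eqv_perm)

lemma FP_char: "FP n = cls n ` {w \<in> words n. perm_word w = id}"
proof
  show "FP n \<subseteq> cls n ` {w \<in> words n. perm_word w = id}"
  proof
    fix x assume "x \<in> FP n"
    then show "x \<in> cls n ` {w \<in> words n. perm_word w = id}"
      unfolding FP_def
    proof (induction rule: generate.induct)
      case one then show ?case by (auto simp: FB_one)
    next
      case (incl h) then show ?case by (auto simp: Fn_def Pn_def perm_BG)
    next
      case (inv h)
      then obtain w where w: "w \<in> words n" "perm_word w = id" "h = cls n w"
        by (auto simp: Fn_def Pn_def perm_BG)
      have "perm_word (winv w) = id"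
        using eqv_perm[OF winv_left[OF w(1)]] w(2) by (simp add: perm_word_app)
      then show ?case using w by (auto simp: FB_inv)
    next
      case (eng h1 h2) then show ?case by (auto simp: FB_mult perm_word_app)
    qed
  qed
next
  show "cls n ` {w \<in> words n. perm_word w = id} \<subseteq> FP n"
  proof clarify
    fix u assume u: "u \<in> words n" "perm_word u = id"
    then obtain s f where sf: "isBSw s" "s \<in> words n" "isBGw f" "f \<in> words n" "eqv n u (s @ f)"
      using normal_form by blast
    have ps: "perm_word s = id" using eqv_perm[OF sf(5)] u(2) perm_BG[OF sf(3)]
      by (simp add: perm_word_app)
    have "cls n s \<in> Pn n" using sf ps by (auto simp: Pn_def)
    moreover have "cls n f \<in> Fn n" using sf by (auto simp: Fn_def)
    ultimately have "cls n s \<otimes>\<^bsub>FB n\<^esub> cls n f \<in> FP n"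
      unfolding FP_def by (intro generate.eng generate.incl) blast+
    moreover have "cls n u = cls n (s @ f)" using sf(5) cls_eq_iff by blast
    ultimately show "cls n u \<in> FP n" by (simp add: FB_mult)
  qed
qed


lemma invertible_iff:
  assumes A: "A \<in> carrier_mat d d"
  shows "invertible_mat A \<longleftrightarrow> (\<exists>B \<in> carrier_mat d d. A * B = 1\<^sub>m d \<and> B * A = 1\<^sub>m d)"
proof
  assume "invertible_mat A"
  then obtain B where B: "A * B = 1\<^sub>m d" "B * A = 1\<^sub>m (dim_row B)"
    using A unfolding invertible_mat_def inverts_mat_def by auto
  have "dim_col B = d" using arg_cong[OF B(1), of dim_col] by simp
  moreover have "dim_row B = d" using arg_cong[OF B(2), of dim_col] A by simp
  ultimately show "\<exists>B \<in> carrier_mat d d. A * B = 1\<^sub>m d \<and> B * A = 1\<^sub>m d"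
    using B by (intro bexI[where x=B]) auto
next
  assume "\<exists>B \<in> carrier_mat d d. A * B = 1\<^sub>m d \<and> B * A = 1\<^sub>m d"
  then show "invertible_mat A" using A unfolding invertible_mat_def inverts_mat_def
    by (auto simp: square_mat.simps)
qed

lemma smult_smult_mat: "a \<cdot>\<^sub>m (b \<cdot>\<^sub>m A) = (a * b) \<cdot>\<^sub>m (A :: complex mat)"
  by (rule eq_matI) auto

lemma one_smult_mat': "(1::complex) \<cdot>\<^sub>m A = A"
  by (rule eq_matI) auto

lemma invertible_smult:
  assumes A: "A \<in> carrier_mat d d" "invertible_mat A" and c: "(c::complex) \<noteq> 0"
  shows "invertible_mat (c \<cdot>\<^sub>m A)"
proof -
  obtain B where B: "B \<in> carrier_mat d d" "A * B = 1\<^sub>m d" "B * A = 1\<^sub>m d"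
    using A invertible_iff by blast
  have "(c \<cdot>\<^sub>m A) * (inverse c \<cdot>\<^sub>m B) = c \<cdot>\<^sub>m (A * (inverse c \<cdot>\<^sub>m B))"
    using A B by (intro mult_smult_assoc_mat) auto
  also have "\<dots> = c \<cdot>\<^sub>m (inverse c \<cdot>\<^sub>m (A * B))"
    using A B by (subst mult_smult_distrib) auto
  also have "\<dots> = 1\<^sub>m d" using B c by (simp add: smult_smult_mat one_smult_mat')
  finally have 1: "(c \<cdot>\<^sub>m A) * (inverse c \<cdot>\<^sub>m B) = 1\<^sub>m d" .
  have "(inverse c \<cdot>\<^sub>m B) * (c \<cdot>\<^sub>m A) = inverse c \<cdot>\<^sub>m (B * (c \<cdot>\<^sub>m A))"
    using A B by (intro mult_smult_assoc_mat) auto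
  also have "\<dots> = inverse c \<cdot>\<^sub>m (c \<cdot>\<^sub>m (B * A))"
    using A B by (subst mult_smult_distrib) auto
  also have "\<dots> = 1\<^sub>m d" using B c by (simp add: smult_smult_mat one_smult_mat')
  finally have 2: "(inverse c \<cdot>\<^sub>m B) * (c \<cdot>\<^sub>m A) = 1\<^sub>m d" .
  show ?thesis using A B 1 2 by (subst invertible_iff[of _ d]) auto
qed

definition tnz :: "(nat \<Rightarrow> complex) \<Rightarrow> nat \<Rightarrow> complex" where
  "tnz t j = (if t j = 0 then 1 else t j)"

lemma tnz_nz: "\<forall>j. tnz t j \<noteq> 0" by (simp add: tnz_def)

definition chiX :: "(nat \<Rightarrow> complex) \<Rightarrow> word set \<Rightarrow> complex" where
  "chiX t X = chi (tnz t) (SOME w. w \<in> X)"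

lemma chiX_cls: "chiX t (cls n w) = chi (tnz t) w"
  unfolding chiX_def using eqv_chi[OF some_cls tnz_nz] by blast

lemma FPgroup_carrier: "carrier (FPgroup n) = FP n" by (simp add: FPgroup_def)
lemma FPgroup_mult: "mult (FPgroup n) = mult (FB n)" by (simp add: FPgroup_def)

lemma FP_elem: "X \<in> FP n \<Longrightarrow> \<exists>w. w \<in> words n \<and> perm_word w = id \<and> X = cls n w"
  by (auto simp: FP_char)

lemma part1:
  assumes t: "\<forall>i \<in> {1..n}. t i \<noteq> 0" and rho: "\<rho> \<in> hom (FPgroup n) (GL d)"
  shows "\<exists>\<rho>t. twisted n d \<rho> t \<rho>t"
proof -
  define rt where "rt = (\<lambda>X. chiX t X \<cdot>\<^sub>m \<rho> X)"
  have rhoX: "\<rho> X \<in> carrier_mat d d \<and> invertible_mat (\<rho> X)" if "X \<in> FP n" for X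
    using rho that unfolding hom_def GL_def by (auto simp: FPgroup_carrier)
  have "rt \<in> hom (FPgroup n) (GL d)"
  proof (rule homI)
    fix X assume X: "X \<in> carrier (FPgroup n)"
    then have "X \<in> FP n" by (simp add: FPgroup_carrier)
    then obtain w where "X = cls n w" by (auto dest: FP_elem)
    then have "chiX t X \<noteq> 0" by (simp add: chiX_cls chi_nz tnz_nz)
    then show "rt X \<in> carrier (GL d)" using rhoX[OF \<open>X \<in> FP n\<close>]
      unfolding rt_def GL_def by (auto intro: invertible_smult)
  next
    fix X Y assume XY: "X \<in> carrier (FPgroup n)" "Y \<in> carrier (FPgroup n)"
    then have XY': "X \<in> FP n" "Y \<in> FP n" by (auto simp: FPgroup_carrier)
    obtain u where u: "u \<in> words n" "perm_word u = id" "X = cls n u" using FP_elem[OF XY'(1)] by blast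
    obtain v where v: "v \<in> words n" "perm_word v = id" "Y = cls n v" using FP_elem[OF XY'(2)] by blast
    have chi: "chiX t (X \<otimes>\<^bsub>FPgroup n\<^esub> Y) = chiX t X * chiX t Y"
      using u v by (simp add: FPgroup_mult FB_mult chiX_cls chi_app)
    have hm: "\<rho> (X \<otimes>\<^bsub>FPgroup n\<^esub> Y) = \<rho> X * \<rho> Y"
      using rho XY unfolding hom_def GL_def by auto
    have cX: "\<rho> X \<in> carrier_mat d d" and cY: "\<rho> Y \<in> carrier_mat d d"
      using rhoX[OF XY'(1)] rhoX[OF XY'(2)] by auto
    have "(chiX t X \<cdot>\<^sub>m \<rho> X) * (chiX t Y \<cdot>\<^sub>m \<rho> Y) = chiX t X \<cdot>\<^sub>m (\<rho> X * (chiX t Y \<cdot>\<^sub>m \<rho> Y))"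
      using cX cY by (intro mult_smult_assoc_mat) auto
    also have "\<dots> = chiX t X \<cdot>\<^sub>m (chiX t Y \<cdot>\<^sub>m (\<rho> X * \<rho> Y))"
      using cX cY by (subst mult_smult_distrib) auto
    finally show "rt (X \<otimes>\<^bsub>FPgroup n\<^esub> Y) = rt X \<otimes>\<^bsub>GL d\<^esub> rt Y"
      unfolding rt_def chi hm by (simp add: GL_def smult_smult_mat)
  qed
  moreover have "rt (gen_g n i) = t i \<cdot>\<^sub>m \<rho> (gen_g n i)" if "i \<in> {1..n}" for i
    using t that by (simp add: rt_def gen_g_def chiX_cls tnz_def)
  moreover have "rt \<beta> = \<rho> \<beta>" if b: "\<beta> \<in> Pn n" for \<beta>
  proof -
    obtain w where "isBSw w" "\<beta> = cls n w" using b unfolding Pn_def by blast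
    then show ?thesis by (simp add: rt_def chiX_cls chi_BS one_smult_mat')
  qed
  ultimately show ?thesis unfolding twisted_def by blast
qed


definition lin :: "nat \<Rightarrow> (int \<times> word) list \<Rightarrow> gring" where
  "lin n L = (\<lambda>X. sum_list (map (\<lambda>(c, w). if cls n w = X then c else 0) L))"

lemma lin_Nil[simp]: "lin n [] X = 0" by (simp add: lin_def)
lemma lin_Cons[simp]: "lin n ((c, w) # L) X = (if cls n w = X then c else 0) + lin n L X"
  by (simp add: lin_def)
lemma lin_append[simp]: "lin n (A @ B) X = lin n A X + lin n B X"
  by (simp add: lin_def)

lemma supp_lin: "supp (lin n L) \<subseteq> cls n ` snd ` set L"
proof (induction L)
  case Nil then show ?case by (auto simp: supp_def)
next
  case (Cons x L) then show ?case by (cases x) (auto simp: supp_def split: if_splits)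
qed

lemma finite_supp_lin: "finite (supp (lin n L))"
  by (rule finite_subset[OF supp_lin]) auto

lemma delta_lin: "delta (cls n w) = lin n [(1, w)]"
  by (auto simp: delta_def fun_eq_iff)

definition prodl :: "(int \<times> word) list \<Rightarrow> (int \<times> word) list \<Rightarrow> (int \<times> word) list" where
  "prodl A B = concat (map (\<lambda>(c, u). map (\<lambda>(d, v). (c * d, u @ v)) B) A)"

lemma prodl_simps[simp]: "prodl [] B = []" "prodl ((c, u) # A) B = map (\<lambda>(d, v). (c * d, u @ v)) B @ prodl A B"
  by (simp_all add: prodl_def)

lemma prodl_Nil2[simp]: "prodl A [] = []" by (simp add: prodl_def)

lemma gr_mult_ext:
  assumes "finite SA" "supp a \<subseteq> SA" "finite SB" "supp b \<subseteq> SB"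
  shows "gr_mult n a b X = (\<Sum>y\<in>SA. \<Sum>z\<in>SB. if y \<otimes>\<^bsub>FB n\<^esub> z = X then a y * b z else 0)"
proof -
  have "gr_mult n a b X = (\<Sum>y\<in>supp a. \<Sum>z\<in>SB. if y \<otimes>\<^bsub>FB n\<^esub> z = X then a y * b z else 0)"
    unfolding gr_mult_def
  proof (rule sum.cong[OF refl])
    fix y show "(\<Sum>z\<in>supp b. if y \<otimes>\<^bsub>FB n\<^esub> z = X then a y * b z else 0)
      = (\<Sum>z\<in>SB. if y \<otimes>\<^bsub>FB n\<^esub> z = X then a y * b z else 0)"
      by (rule sum.mono_neutral_left) (use assms in \<open>auto simp: supp_def cong: if_cong\<close>)
  qed
  also have "\<dots> = (\<Sum>y\<in>SA. \<Sum>z\<in>SB. if y \<otimes>\<^bsub>FB n\<^esub> z = X then a y * b z else 0)"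
    by (rule sum.mono_neutral_left) (use assms in \<open>auto simp: supp_def cong: if_cong\<close>)
  finally show ?thesis .
qed

lemma inner_sum:
  assumes "finite S" "cls n ` snd ` set B \<subseteq> S"
  shows "(\<Sum>z\<in>S. if cls n u \<otimes>\<^bsub>FB n\<^esub> z = X then c * lin n B z else 0)
    = lin n (map (\<lambda>(d, v). (c * d, u @ v)) B) X"
  using assms(2)
proof (induction B)
  case Nil then show ?case by (simp cong: if_cong)
next
  case (Cons x B)
  obtain d v where x: "x = (d, v)" by (cases x)
  have v: "cls n v \<in> S" using Cons.prems x by auto
  have "(\<Sum>z\<in>S. if cls n u \<otimes>\<^bsub>FB n\<^esub> z = X then c * lin n (x # B) z else 0)
    = (\<Sum>z\<in>S. if cls n v = z then (if cls n u \<otimes>\<^bsub>FB n\<^esub> z = X then c * d else 0) else 0)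
      + (\<Sum>z\<in>S. if cls n u \<otimes>\<^bsub>FB n\<^esub> z = X then c * lin n B z else 0)"
    unfolding x sum.distrib[symmetric] by (rule sum.cong) (auto simp: distrib_left)
  also have "(\<Sum>z\<in>S. if cls n v = z then (if cls n u \<otimes>\<^bsub>FB n\<^esub> z = X then c * d else 0) else 0)
     = (if cls n (u @ v) = X then c * d else 0)"
    using v assms(1) by (simp add: sum.delta FB_mult)
  finally show ?case using Cons x by (simp add: distrib_left)
qed

lemma outer_sum:
  assumes "finite S" "cls n ` snd ` set A \<subseteq> S" "finite SB" "cls n ` snd ` set B \<subseteq> SB"
  shows "(\<Sum>y\<in>S. \<Sum>z\<in>SB. if y \<otimes>\<^bsub>FB n\<^esub> z = X then lin n A y * lin n B z else 0)
    = lin n (prodl A B) X"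
  using assms(2)
proof (induction A)
  case Nil then show ?case by (simp cong: if_cong)
next
  case (Cons x A)
  obtain c u where x: "x = (c, u)" by (cases x)
  have u: "cls n u \<in> S" using Cons.prems x by auto
  have e: "\<And>y z. (if y \<otimes>\<^bsub>FB n\<^esub> z = X then lin n (x # A) y * lin n B z else 0)
    = (if cls n u = y then (if y \<otimes>\<^bsub>FB n\<^esub> z = X then c * lin n B z else 0) else 0)
      + (if y \<otimes>\<^bsub>FB n\<^esub> z = X then lin n A y * lin n B z else 0)"
    unfolding x by (auto simp: distrib_right)
  have e2: "\<And>y. (\<Sum>z\<in>SB. if cls n u = y then (if y \<otimes>\<^bsub>FB n\<^esub> z = X then c * lin n B z else 0) else 0)
    = (if cls n u = y then (\<Sum>z\<in>SB. if y \<otimes>\<^bsub>FB n\<^esub> z = X then c * lin n B z else 0) else 0)"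
    by simp
  have "(\<Sum>y\<in>S. \<Sum>z\<in>SB. if y \<otimes>\<^bsub>FB n\<^esub> z = X then lin n (x # A) y * lin n B z else 0)
    = (\<Sum>y\<in>S. if cls n u = y then (\<Sum>z\<in>SB. if y \<otimes>\<^bsub>FB n\<^esub> z = X then c * lin n B z else 0) else 0)
    + (\<Sum>y\<in>S. \<Sum>z\<in>SB. if y \<otimes>\<^bsub>FB n\<^esub> z = X then lin n A y * lin n B z else 0)"
    unfolding e sum.distrib e2 ..
  also have "(\<Sum>y\<in>S. if cls n u = y then (\<Sum>z\<in>SB. if y \<otimes>\<^bsub>FB n\<^esub> z = X then c * lin n B z else 0) else 0)
    = (\<Sum>z\<in>SB. if cls n u \<otimes>\<^bsub>FB n\<^esub> z = X then c * lin n B z else 0)"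
    using u assms(1) by (simp add: sum.delta)
  also have "\<dots> = lin n (map (\<lambda>(d, v). (c * d, u @ v)) B) X"
    by (rule inner_sum[OF assms(3,4)])
  finally show ?case using Cons x by simp
qed

lemma gr_mult_lin: "gr_mult n (lin n A) (lin n B) = lin n (prodl A B)"
proof
  fix X
  show "gr_mult n (lin n A) (lin n B) X = lin n (prodl A B) X"
    by (subst gr_mult_ext[OF _ supp_lin _ supp_lin]) (auto intro!: outer_sum)
qed


declare upt_Suc[simp del]

type_synonym lmat = "nat \<Rightarrow> nat \<Rightarrow> (int \<times> word) list"

definition linm :: "nat \<Rightarrow> lmat \<Rightarrow> gmat" where
  "linm n A = (\<lambda>k l. lin n (A k l))"

definition Lmult :: "nat \<Rightarrow> lmat \<Rightarrow> lmat \<Rightarrow> lmat" where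
  "Lmult n A B = (\<lambda>k l. concat (map (\<lambda>m. prodl (A k m) (B m l)) [1..<n+1]))"

definition LE :: "nat \<Rightarrow> lmat \<Rightarrow> lmat \<Rightarrow> bool" where
  "LE n A B \<longleftrightarrow> (\<forall>k\<in>{1..n}. \<forall>l\<in>{1..n}. lin n (A k l) = lin n (B k l))"

lemma LE_refl[simp]: "LE n A A" by (simp add: LE_def)
lemma LE_sym: "LE n A B \<Longrightarrow> LE n B A" by (simp add: LE_def)
lemma LE_trans[trans]: "LE n A B \<Longrightarrow> LE n B C \<Longrightarrow> LE n A C" by (simp add: LE_def)

lemma lin_concat: "lin n (concat (map F xs)) X = sum_list (map (\<lambda>m. lin n (F m) X) xs)"
  by (induction xs) auto

lemma sum_list_upt0: "sum_list (map f [Suc 0..<Suc n]) = (\<Sum>m\<in>{Suc 0..n}. f m)"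
proof -
  have "set [Suc 0..<Suc n] = {Suc 0..n}" by auto
  then show ?thesis by (metis sum_set_upt_conv_sum_list_nat)
qed

lemma sum_list_upt: "sum_list (map f [1..<n+1]) = (\<Sum>m\<in>{1..n}. f m)"
  using sum_list_upt0 by simp

lemmas sum_list_upts = sum_list_upt sum_list_upt0

lemma lin_Lmult: "lin n (Lmult n A B k l) X = (\<Sum>m\<in>{1..n}. lin n (prodl (A k m) (B m l)) X)"
  by (simp add: Lmult_def lin_concat sum_list_upts)

lemma gmat_mult_linm: "gmat_mult n (linm n A) (linm n B) = linm n (Lmult n A B)"
  by (auto simp: fun_eq_iff gmat_mult_def linm_def lin_Lmult gr_mult_lin)

lemma lin_prodl_cong: "lin n X = lin n X' \<Longrightarrow> lin n Y = lin n Y' \<Longrightarrow> lin n (prodl X Y) = lin n (prodl X' Y')"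
  by (metis gr_mult_lin)

lemma Lmult_cong: "LE n A A' \<Longrightarrow> LE n B B' \<Longrightarrow> LE n (Lmult n A B) (Lmult n A' B')"
  unfolding LE_def
proof (intro ballI)
  fix k l assume "\<forall>k\<in>{1..n}. \<forall>l\<in>{1..n}. lin n (A k l) = lin n (A' k l)"
    "\<forall>k\<in>{1..n}. \<forall>l\<in>{1..n}. lin n (B k l) = lin n (B' k l)" "k \<in> {1..n}" "l \<in> {1..n}"
  then have "\<And>m. m \<in> {1..n} \<Longrightarrow> lin n (prodl (A k m) (B m l)) = lin n (prodl (A' k m) (B' m l))"
    by (intro lin_prodl_cong) auto
  then show "lin n (Lmult n A B k l) = lin n (Lmult n A' B' k l)"
    by (auto simp: fun_eq_iff lin_Lmult intro!: sum.cong)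
qed

lemma prodl_append1: "prodl (A @ B) C = prodl A C @ prodl B C"
  by (induction A) (auto simp: prodl_def)

lemma prodl_concat1: "prodl (concat Xs) C = concat (map (\<lambda>X. prodl X C) Xs)"
  by (induction Xs) (auto simp: prodl_append1)

lemma lin_prodl_append2: "lin n (prodl A (B @ C)) X = lin n (prodl A B) X + lin n (prodl A C) X"
proof (induction A)
  case (Cons a A) then show ?case by (cases a) auto
qed simp

lemma lin_prodl_concat2: "lin n (prodl A (concat (map F xs))) X = sum_list (map (\<lambda>m. lin n (prodl A (F m)) X) xs)"
  by (induction xs) (auto simp: lin_prodl_append2)

lemma prodl_map1: "prodl (map (\<lambda>(d, v). (c * d, u @ v)) B) C = map (\<lambda>(e, w). (c * e, u @ w)) (prodl B C)"
proof (induction B)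
  case (Cons b B) then show ?case by (cases b) (auto simp: mult.assoc)
qed simp

lemma prodl_assoc: "prodl (prodl A B) C = prodl A (prodl B C)"
proof (induction A)
  case (Cons a A) then show ?case by (cases a) (auto simp: prodl_append1 prodl_map1)
qed simp

lemma Lmult_assoc: "LE n (Lmult n (Lmult n A B) C) (Lmult n A (Lmult n B C))"
  unfolding LE_def
proof (intro ballI)
  fix k l
  show "lin n (Lmult n (Lmult n A B) C k l) = lin n (Lmult n A (Lmult n B C) k l)"
  proof
    fix X
    have "lin n (Lmult n (Lmult n A B) C k l) X
      = (\<Sum>m\<in>{1..n}. \<Sum>p\<in>{1..n}. lin n (prodl (prodl (A k p) (B p m)) (C m l)) X)"
      by (simp add: lin_Lmult Lmult_def prodl_concat1 lin_concat sum_list_upts cong: map_cong)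
    also have "\<dots> = (\<Sum>p\<in>{1..n}. \<Sum>m\<in>{1..n}. lin n (prodl (A k p) (prodl (B p m) (C m l))) X)"
      by (subst sum.swap) (simp add: prodl_assoc)
    also have "\<dots> = lin n (Lmult n A (Lmult n B C) k l) X"
      by (simp only: lin_Lmult, simp add: Lmult_def lin_prodl_concat2 sum_list_upts)
    finally show "lin n (Lmult n (Lmult n A B) C k l) X = lin n (Lmult n A (Lmult n B C) k l) X" .
  qed
qed

definition ONE :: "lmat" where "ONE = (\<lambda>k l. if k = l then [(1, [])] else [])"

lemma prodl_one1[simp]: "prodl [(1, [])] B = B"
proof (induction B)
  case (Cons b B) then show ?case by (cases b) auto
qed simp

lemma prodl_one2[simp]: "prodl B [(1, [])] = B"
proof (induction B)
  case (Cons b B) then show ?case by (cases b) auto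
qed simp

lemma Lmult_one1: "LE n (Lmult n ONE B) B"
  unfolding LE_def
proof (intro ballI)
  fix k l assume k: "k \<in> {1..n}"
  show "lin n (Lmult n ONE B k l) = lin n (B k l)"
  proof
    fix X
    have "\<And>m. lin n (prodl (ONE k m) (B m l)) X = (if k = m then lin n (B m l) X else 0)"
      by (auto simp: ONE_def)
    then have "lin n (Lmult n ONE B k l) X = (\<Sum>m\<in>{1..n}. if k = m then lin n (B m l) X else 0)"
      by (simp add: lin_Lmult)
    also have "\<dots> = lin n (B k l) X" using k by (simp add: sum.delta)
    finally show "lin n (Lmult n ONE B k l) X = lin n (B k l) X" .
  qed
qed

lemma Lmult_one2: "LE n (Lmult n B ONE) B"
  unfolding LE_def
proof (intro ballI)
  fix k l assume l: "l \<in> {1..n}"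
  show "lin n (Lmult n B ONE k l) = lin n (B k l)"
  proof
    fix X
    have "\<And>m. lin n (prodl (B k m) (ONE m l)) X = (if l = m then lin n (B k m) X else 0)"
      by (auto simp: ONE_def)
    then have "lin n (Lmult n B ONE k l) X = (\<Sum>m\<in>{1..n}. if l = m then lin n (B k m) X else 0)"
      by (simp add: lin_Lmult)
    also have "\<dots> = lin n (B k l) X" using l by (simp add: sum.delta)
    finally show "lin n (Lmult n B ONE k l) X = lin n (B k l) X" .
  qed
qed

lemma gmat_one_linm: "gmat_one n = linm n ONE"
  by (auto simp: fun_eq_iff gmat_one_def linm_def ONE_def delta_def FB_one)


definition DL :: "nat \<Rightarrow> lmat" where
  "DL i = (\<lambda>k l.
     if k = i \<and> l = i then []
     else if k = i \<and> l = i + 1 then [(1, [P (BG i)])]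
     else if k = i + 1 \<and> l = i then [(1, [])]
     else if k = i + 1 \<and> l = i + 1 then [(1, []), (-1, [P (BG i)])]
     else if k = l then [(1, [])] else [])"

definition DIL :: "nat \<Rightarrow> lmat" where
  "DIL i = (\<lambda>k l.
     if k = i \<and> l = i then [(1, []), (-1, [N (BG i)])]
     else if k = i \<and> l = i + 1 then [(1, [])]
     else if k = i + 1 \<and> l = i then [(1, [N (BG i)])]
     else if k = i + 1 \<and> l = i + 1 then []
     else if k = l then [(1, [])] else [])"

lemma lin_one: "lin n [(1, [])] = delta (one (FB n))"
  by (auto simp: fun_eq_iff delta_def FB_one)
lemma lin_zero: "lin n [] = (\<lambda>_. 0)"
  by (auto simp: fun_eq_iff)
lemma lin_g: "lin n [(1, [P (BG i)])] = delta (gen_g n i)"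
  by (auto simp: fun_eq_iff delta_def gen_g_def)
lemma lin_gi: "lin n [(1, [N (BG i)])] = delta (cls n [N (BG i)])"
  by (auto simp: fun_eq_iff delta_def)
lemma lin_1g: "lin n [(1, []), (-1, [P (BG i)])] = (\<lambda>x. delta (one (FB n)) x - delta (gen_g n i) x)"
  by (auto simp: fun_eq_iff delta_def gen_g_def FB_one)
lemma lin_1gi: "lin n [(1, []), (-1, [N (BG i)])] = (\<lambda>x. delta (one (FB n)) x - delta (cls n [N (BG i)]) x)"
  by (auto simp: fun_eq_iff delta_def FB_one)

lemma Dmat_linm: "Dmat n i = linm n (DL i)"
  unfolding Dmat_def linm_def DL_def
  by (intro ext) (simp only: lin_one lin_zero lin_g lin_1g if_distrib[of "lin n"])

lemma Dinv_linm: "Dinv n i = linm n (DIL i)"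
  unfolding Dinv_def linm_def DIL_def
  by (intro ext) (simp only: lin_one lin_zero lin_gi lin_1gi if_distrib[of "lin n"])

fun PL :: "letter \<Rightarrow> lmat" where
  "PL (BS i, True) = (\<lambda>k l. prodl [(1, [P (BS i)])] (DL i k l))"
| "PL (BS i, False) = (\<lambda>k l. prodl (DIL i k l) [(1, [N (BS i)])])"
| "PL (BG j, b) = ONE"

lemma phi_letter_linm: "phi_letter n x = linm n (PL x)"
proof -
  obtain g b where x: "x = (g, b)" by (cases x)
  show ?thesis
  proof (cases g)
    case (BG j) then show ?thesis using x by (simp add: gmat_one_linm)
  next
    case (BS i) then show ?thesis using x
      by (cases b) (simp_all only: phi_letter.simps PL.simps linm_def Dmat_linm Dinv_linm delta_lin gr_mult_lin)
  qed
qed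

fun PW :: "nat \<Rightarrow> word \<Rightarrow> lmat" where
  "PW n [] = ONE"
| "PW n (x # w) = Lmult n (PL x) (PW n w)"

lemma phi_word_linm: "phi_word n w = linm n (PW n w)"
  by (induction w) (auto simp: gmat_one_linm phi_letter_linm gmat_mult_linm)

lemma PW_app: "LE n (PW n (u @ v)) (Lmult n (PW n u) (PW n v))"
proof (induction u)
  case Nil then show ?case using LE_sym[OF Lmult_one1] by simp
next
  case (Cons x u)
  have "LE n (PW n ((x # u) @ v)) (Lmult n (PL x) (Lmult n (PW n u) (PW n v)))"
    using Lmult_cong[OF LE_refl Cons.IH] by simp
  also have "LE n \<dots> (Lmult n (PW n (x # u)) (PW n v))"
    using LE_sym[OF Lmult_assoc] by simp
  finally show ?case .
qed


lemma conj_i1: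
  assumes "1 \<le> i" "i < n"
  shows "eqv n ([N (BG (i+1)), P (BG i), P (BG (i+1))] @ [P (BS i)]) [P (BS i), P (BG (i+1))]"
proof -
  have a1: "eqv n [N (BG (i+1)), P (BS i)] [P (BS i), N (BG i)]"
    using inv_push[OF R_g1[OF assms(1,2)]] assms by (simp add: alph_iff)
  have "eqv n ([N (BG (i+1)), P (BG i), P (BG (i+1))] @ [P (BS i)]) ([N (BG (i+1)), P (BG i)] @ [P (BS i), P (BG i)] @ [])"
    by (rule step[OF R_g1[OF assms(1,2)], of _ "[N (BG (i+1)), P (BG i)]" "[]"]) auto
  also have "eqv n ([N (BG (i+1)), P (BG i)] @ [P (BS i), P (BG i)] @ [])
    ([N (BG (i+1))] @ [P (BS i), P (BG i), P (BG (i+1)), N (BG i)] @ [P (BG i)])"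
    by (rule step[OF R_g0[OF assms(1,2)], of _ "[N (BG (i+1))]" "[P (BG i)]"]) auto
  also have "eqv n ([N (BG (i+1))] @ [P (BS i), P (BG i), P (BG (i+1)), N (BG i)] @ [P (BG i)])
    ([N (BG (i+1)), P (BS i), P (BG i), P (BG (i+1))] @ [] @ [])"
    by (rule step[OF cancel1[of "N (BG i)" n], of _ "[N (BG (i+1)), P (BS i), P (BG i), P (BG (i+1))]" "[]"])
      (use assms in \<open>auto simp: alph_iff\<close>)
  also have "eqv n ([N (BG (i+1)), P (BS i), P (BG i), P (BG (i+1))] @ [] @ [])
    ([] @ [P (BS i), N (BG i)] @ [P (BG i), P (BG (i+1))])"
    by (rule step[OF a1, of _ "[]" "[P (BG i), P (BG (i+1))]"]) auto
  also have "eqv n ([] @ [P (BS i), N (BG i)] @ [P (BG i), P (BG (i+1))])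
    ([P (BS i)] @ [] @ [P (BG (i+1))])"
    by (rule step[OF cancel1[of "N (BG i)" n], of _ "[P (BS i)]" "[P (BG (i+1))]"]) (use assms in \<open>auto simp: alph_iff\<close>)
  finally show ?thesis by simp
qed

definition pushP :: "nat \<Rightarrow> bool \<Rightarrow> nat \<Rightarrow> word" where
  "pushP j b i = (if j = i then (if b then [P (BG i), P (BG (i+1)), N (BG i)] else [P (BG i), N (BG (i+1)), N (BG i)])
     else if j = i + 1 then [(BG i, b)] else [(BG j, b)])"

definition pushN :: "nat \<Rightarrow> bool \<Rightarrow> nat \<Rightarrow> word" where
  "pushN j b i = (if j = i then [(BG (i+1), b)]
     else if j = i + 1 then (if b then [N (BG (i+1)), P (BG i), P (BG (i+1))] else [N (BG (i+1)), N (BG i), P (BG (i+1))])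
     else [(BG j, b)])"

lemma pushP_pos:
  assumes "1 \<le> i" "i < n" "1 \<le> j" "j \<le> n"
  shows "eqv n [P (BG j), P (BS i)] (P (BS i) # pushP j True i)"
  using R_g0[OF assms(1,2)] R_g1[OF assms(1,2)] R_comm_g[OF assms] unfolding pushP_def
  by (cases "j = i"; cases "j = i + 1") auto

lemma pushP_sound:
  assumes "1 \<le> i" "i < n" "1 \<le> j" "j \<le> n"
  shows "eqv n [(BG j, b), P (BS i)] (P (BS i) # pushP j b i)"
proof (cases b)
  case True then show ?thesis using pushP_pos[OF assms] by simp
next
  case False
  have "eqv n [(BG j, False), P (BS i)] (P (BS i) # winv (pushP j True i))"
    using inv_push[OF pushP_pos[OF assms]] assms by (auto simp: alph_iff pushP_def)
  moreover have "winv (pushP j True i) = pushP j False i" by (simp add: pushP_def)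
  ultimately show ?thesis using False by simp
qed

lemma conjw_pos:
  assumes "1 \<le> i" "i < n" "1 \<le> j" "j \<le> n"
  shows "eqv n (pushN j True i @ [P (BS i)]) [P (BS i), P (BG j)]"
proof -
  consider "j = i" | "j = i + 1" | "j \<noteq> i \<and> j \<noteq> i + 1" by blast
  then show ?thesis
  proof cases
    case 1 then show ?thesis using R_g1[OF assms(1,2)] by (simp add: pushN_def)
  next
    case 2 then show ?thesis using conj_i1[OF assms(1,2)] by (simp add: pushN_def)
  next
    case 3 then show ?thesis using R_comm_g[OF assms] by (simp add: pushN_def)
  qed
qed

lemma conjw_sound:
  assumes "1 \<le> i" "i < n" "1 \<le> j" "j \<le> n"
  shows "eqv n (pushN j b i @ [P (BS i)]) [P (BS i), (BG j, b)]"
proof (cases b)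
  case True then show ?thesis using conjw_pos[OF assms] by simp
next
  case False
  have "eqv n (winv (pushN j True i) @ [P (BS i)]) [P (BS i), (BG j, False)]"
    using inv_conj[OF conjw_pos[OF assms]] assms by (auto simp: alph_iff pushN_def)
  moreover have "winv (pushN j True i) = pushN j False i" by (simp add: pushN_def)
  ultimately show ?thesis using False by simp
qed

lemma conj_to_push:
  assumes "eqv n (f @ [P (BS i)]) [P (BS i), x]" "1 \<le> i" "i < n"
  shows "eqv n [x, N (BS i)] (N (BS i) # f)"
proof -
  have "eqv n ([] @ [] @ [x, N (BS i)]) ([] @ [N (BS i), P (BS i)] @ [x, N (BS i)])"
    by (rule step[OF eqv_sym[OF cancel2[of "P (BS i)" n]]]) (use assms in \<open>auto simp: alph_iff\<close>)
  also have "eqv n ([] @ [N (BS i), P (BS i)] @ [x, N (BS i)]) ([N (BS i)] @ (f @ [P (BS i)]) @ [N (BS i)])"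
    by (rule step[OF eqv_sym[OF assms(1)], of _ "[N (BS i)]" "[N (BS i)]"]) auto
  also have "eqv n ([N (BS i)] @ (f @ [P (BS i)]) @ [N (BS i)]) ((N (BS i) # f) @ [] @ [])"
    by (rule step[OF cancel1[of "P (BS i)" n], of _ "N (BS i) # f" "[]"]) (use assms in \<open>auto simp: alph_iff\<close>)
  finally show ?thesis by simp
qed

fun push :: "letter \<Rightarrow> letter \<Rightarrow> word" where
  "push (BG j, b) (BS i, c) = (if c then pushP j b i else pushN j b i)"
| "push x y = [x]"

lemma push_sound:
  assumes "fst x \<in> alphabet n" "is_BG (fst x)" "fst y \<in> alphabet n" "is_BS (fst y)"
  shows "eqv n [x, y] (y # push x y) \<and> push x y \<in> words n \<and> isBGw (push x y)"
proof -
  obtain j b where x: "x = (BG j, b)" using assms(2) by (cases x; cases "fst x") auto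
  obtain i c where y: "y = (BS i, c)" using assms(4) by (cases y; cases "fst y") auto
  have ij: "1 \<le> i" "i < n" "1 \<le> j" "j \<le> n" using assms unfolding x y by (auto simp: alph_iff)
  have e: "eqv n [x, y] (y # push x y)"
  proof (cases c)
    case True then show ?thesis using pushP_sound[OF ij, of b] unfolding x y by simp
  next
    case False then show ?thesis using conj_to_push[OF conjw_sound[OF ij, of b] ij(1,2)] unfolding x y by simp
  qed
  moreover have "push x y \<in> words n \<and> isBGw (push x y)"
    using ij unfolding x y by (cases c) (auto simp: pushP_def pushN_def alph_iff)
  ultimately show ?thesis by blast
qed

definition pushw1 :: "word \<Rightarrow> letter \<Rightarrow> word" where
  "pushw1 f y = concat (map (\<lambda>x. push x y) f)"

lemma pushw1_sound:
  assumes "isBGw f" "f \<in> words n" "fst y \<in> alphabet n" "is_BS (fst y)"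
  shows "eqv n (f @ [y]) (y # pushw1 f y) \<and> pushw1 f y \<in> words n \<and> isBGw (pushw1 f y)"
  using assms(1,2)
proof (induction f)
  case Nil then show ?case by (simp add: pushw1_def eqv_refl)
next
  case (Cons x f)
  then have IH: "eqv n (f @ [y]) (y # pushw1 f y)" "pushw1 f y \<in> words n" "isBGw (pushw1 f y)" by auto
  have px: "eqv n [x, y] (y # push x y)" "push x y \<in> words n" "isBGw (push x y)"
    using push_sound[of x n y] Cons.prems assms(3,4) by auto
  have "eqv n ((x # f) @ [y]) ([x] @ (y # pushw1 f y) @ [])"
    by (rule step[OF IH(1), of _ "[x]" "[]"]) auto
  also have "eqv n ([x] @ (y # pushw1 f y) @ []) ([] @ (y # push x y) @ pushw1 f y)"
    by (rule step[OF px(1), of _ "[]" "pushw1 f y"]) auto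
  finally show ?case using IH px by (simp add: pushw1_def ball_Un)
qed

fun pushs :: "word \<Rightarrow> word \<Rightarrow> word" where
  "pushs f [] = f"
| "pushs f (y # s) = pushs (pushw1 f y) s"

lemma pushs_sound:
  "isBSw s \<Longrightarrow> s \<in> words n \<Longrightarrow> isBGw f \<Longrightarrow> f \<in> words n \<Longrightarrow>
   eqv n (f @ s) (s @ pushs f s) \<and> pushs f s \<in> words n \<and> isBGw (pushs f s)"
proof (induction s arbitrary: f)
  case Nil then show ?case by (simp add: eqv_refl)
next
  case (Cons y s)
  have p1: "eqv n (f @ [y]) (y # pushw1 f y)" "pushw1 f y \<in> words n" "isBGw (pushw1 f y)"
    using pushw1_sound[of f n y] Cons.prems by auto
  have p2: "eqv n (pushw1 f y @ s) (s @ pushs (pushw1 f y) s)" "pushs (pushw1 f y) s \<in> words n"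
    "isBGw (pushs (pushw1 f y) s)"
    using Cons.IH[of "pushw1 f y"] Cons.prems p1(2,3) by auto
  have "eqv n (f @ y # s) ([] @ (y # pushw1 f y) @ s)"
    by (rule step[OF p1(1), of _ "[]" s]) auto
  also have "eqv n ([] @ (y # pushw1 f y) @ s) ([y] @ (s @ pushs (pushw1 f y) s) @ [])"
    by (rule step[OF p2(1), of _ "[y]" "[]"]) auto
  finally show ?case using p2 by simp
qed

fun spl :: "word \<Rightarrow> word \<times> word" where
  "spl [] = ([], [])"
| "spl (x # w) = (case spl w of (s, f) \<Rightarrow> if is_BS (fst x) then (x # s, f) else (s, pushs [x] s @ f))"

lemma spl_sound:
  "w \<in> words n \<Longrightarrow> eqv n w (fst (spl w) @ snd (spl w)) \<and> fst (spl w) \<in> words n \<and> snd (spl w) \<in> words n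
     \<and> isBSw (fst (spl w)) \<and> isBGw (snd (spl w))"
proof (induction w)
  case Nil then show ?case by (simp add: eqv_refl)
next
  case (Cons x w)
  obtain s f where sf: "spl w = (s, f)" by (cases "spl w")
  have IH: "eqv n w (s @ f)" "s \<in> words n" "f \<in> words n" "isBSw s" "isBGw f"
    using Cons sf by auto
  have x: "fst x \<in> alphabet n" using Cons.prems by simp
  have ex: "eqv n (x # w) (x # s @ f)" using eqv_Cons[OF IH(1)] .
  show ?case
  proof (cases "is_BS (fst x)")
    case True then show ?thesis using ex IH x sf by simp
  next
    case False
    then have bg: "is_BG (fst x)" by (cases "fst x") auto
    have p: "eqv n ([x] @ s) (s @ pushs [x] s)" "pushs [x] s \<in> words n" "isBGw (pushs [x] s)"
      using pushs_sound[OF IH(4,2), of "[x]"] bg x by auto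
    have "eqv n (x # s @ f) (s @ pushs [x] s @ f)"
      using step[OF p(1), of "x # s @ f" "[]" f] by simp
    then have "eqv n (x # w) (s @ pushs [x] s @ f)" by (rule eqv_trans[OF ex])
    then show ?thesis using IH p False sf by (simp add: ball_Un)
  qed
qed

fun red :: "word \<Rightarrow> word" where
  "red [] = []"
| "red (x # w) = (case red w of [] \<Rightarrow> [x]
     | y # r \<Rightarrow> if fst y = fst x \<and> snd y = (\<not> snd x) then r else x # y # r)"

lemma red_sound: "w \<in> words n \<Longrightarrow> eqv n w (red w) \<and> set (red w) \<subseteq> set w"
proof (induction w)
  case Nil then show ?case by (simp add: eqv_refl)
next
  case (Cons x w)
  then have IH: "eqv n w (red w)" "set (red w) \<subseteq> set w" and x: "fst x \<in> alphabet n" by auto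
  have ex: "eqv n (x # w) (x # red w)" using eqv_Cons[OF IH(1)] .
  show ?case
  proof (cases "red w")
    case Nil then show ?thesis using ex IH by simp
  next
    case (Cons y r)
    show ?thesis
    proof (cases "fst y = fst x \<and> snd y = (\<not> snd x)")
      case True
      then have "y = (fst x, \<not> snd x)" by (cases y) auto
      then have "eqv n (x # red w) ([] @ [] @ r)"
        using step[OF cancel1[OF x], of "x # red w" "[]" r] Cons by simp
      then show ?thesis using ex IH Cons True by (auto intro: eqv_trans)
    next
      case False then show ?thesis using ex IH Cons by auto
    qed
  qed
qed

fun bn :: "word \<Rightarrow> word" where
  "bn [(BS a, True), (BS b, True), (BS c, True)] =
     (if a = b + 1 \<and> c = a then [P (BS b), P (BS a), P (BS b)] else [(BS a, True), (BS b, True), (BS c, True)])"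
| "bn [(BS a, True), (BS b, True)] = (if b + 1 < a then [P (BS b), P (BS a)] else [(BS a, True), (BS b, True)])"
| "bn s = s"

lemma bn_sound: "s \<in> words n \<Longrightarrow> eqv n s (bn s)"
proof (induction s rule: bn.induct)
  case (1 a b c)
  show ?case
  proof (cases "a = b + 1 \<and> c = a")
    case True
    have "eqv n [P (BS a), P (BS b), P (BS a)] [P (BS b), P (BS a), P (BS b)]"
      by (rule rel_eqv) (use 1 True in \<open>unfold rels_def, auto simp: alph_iff\<close>)
    then show ?thesis using True by simp
  next
    case False then show ?thesis by (auto simp: eqv_refl)
  qed
next
  case (2 a b)
  show ?case
  proof (cases "b + 1 < a")
    case True
    have "eqv n [P (BS a), P (BS b)] [P (BS b), P (BS a)]"
      by (rule rel_eqv) (use 2 True in \<open>unfold rels_def, auto simp: alph_iff\<close>)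
    then show ?thesis using True by simp
  next
    case False then show ?thesis by (simp add: eqv_refl)
  qed
qed (simp_all add: eqv_refl)

definition nf :: "word \<Rightarrow> word" where
  "nf w = bn (red (fst (spl w))) @ red (snd (spl w))"

lemma nf_sound: "w \<in> words n \<Longrightarrow> eqv n w (nf w)"
proof -
  assume w: "w \<in> words n"
  have s: "eqv n w (fst (spl w) @ snd (spl w))" "fst (spl w) \<in> words n" "snd (spl w) \<in> words n"
    using spl_sound[OF w] by auto
  have r1: "eqv n (fst (spl w)) (red (fst (spl w)))" "set (red (fst (spl w))) \<subseteq> set (fst (spl w))"
    using red_sound[OF s(2)] by auto
  have r2: "eqv n (snd (spl w)) (red (snd (spl w)))"
    using red_sound[OF s(3)] by auto
  have "red (fst (spl w)) \<in> words n" using r1(2) s(2) unfolding words_def by auto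
  then have b: "eqv n (red (fst (spl w))) (bn (red (fst (spl w))))" by (rule bn_sound)
  have "eqv n (fst (spl w) @ snd (spl w)) (nf w)"
    unfolding nf_def by (rule eqv_app[OF eqv_trans[OF r1(1) b] r2])
  then show ?thesis using s(1) by (rule eqv_trans[rotated])
qed

definition cnt :: "(int \<times> word) list \<Rightarrow> word \<Rightarrow> int" where
  "cnt L v = sum_list (map (\<lambda>(c, w). if nf w = v then c else 0) L)"

lemma lin_by_cnt:
  assumes "finite V" "nf ` snd ` set L \<subseteq> V" "\<forall>w \<in> snd ` set L. w \<in> words n"
  shows "lin n L X = (\<Sum>v\<in>V. if cls n v = X then cnt L v else 0)"
  using assms(2,3)
proof (induction L)
  case Nil then show ?case by (simp add: cnt_def cong: if_cong)
next
  case (Cons x L)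
  obtain c w where x: "x = (c, w)" by (cases x)
  have w: "w \<in> words n" "nf w \<in> V" using Cons.prems x by auto
  have cw: "cls n w = cls n (nf w)" using nf_sound[OF w(1)] cls_eq_iff by blast
  have IH: "lin n L X = (\<Sum>v\<in>V. if cls n v = X then cnt L v else 0)" using Cons by auto
  have "(\<Sum>v\<in>V. if cls n v = X then cnt (x # L) v else 0)
    = (\<Sum>v\<in>V. if nf w = v then (if cls n v = X then c else 0) else 0) + (\<Sum>v\<in>V. if cls n v = X then cnt L v else 0)"
    unfolding sum.distrib[symmetric] by (rule sum.cong) (auto simp: cnt_def x)
  also have "(\<Sum>v\<in>V. if nf w = v then (if cls n v = X then c else 0) else 0) = (if cls n (nf w) = X then c else 0)"
    using w(2) assms(1) by (simp add: sum.delta)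
  finally show ?case using IH x cw by simp
qed

lemma lin_eqI:
  assumes "\<forall>w \<in> snd ` set (L1 @ L2). w \<in> words n" "cnt L1 = cnt L2"
  shows "lin n L1 = lin n L2"
proof
  fix X
  let ?V = "nf ` snd ` set (L1 @ L2)"
  have "lin n L1 X = (\<Sum>v\<in>?V. if cls n v = X then cnt L1 v else 0)"
    by (rule lin_by_cnt) (use assms in auto)
  also have "\<dots> = (\<Sum>v\<in>?V. if cls n v = X then cnt L2 v else 0)" using assms(2) by (simp cong: if_cong)
  also have "\<dots> = lin n L2 X"
    by (rule lin_by_cnt[symmetric]) (use assms in auto)
  finally show "lin n L1 X = lin n L2 X" .
qed


definition BLK :: "nat set \<Rightarrow> (int \<times> word) list \<Rightarrow> lmat \<Rightarrow> lmat" where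
  "BLK J c A = (\<lambda>k l. if k \<in> J \<and> l \<in> J then A k l else if k = l then c else [])"

definition Jprod :: "nat list \<Rightarrow> lmat \<Rightarrow> lmat \<Rightarrow> lmat" where
  "Jprod js A B = (\<lambda>k l. concat (map (\<lambda>m. prodl (A k m) (B m l)) js))"

lemma BLK_mult:
  assumes "set js \<subseteq> {1..n}" "distinct js"
  shows "LE n (Lmult n (BLK (set js) c A) (BLK (set js) c' B)) (BLK (set js) (prodl c c') (Jprod js A B))"
  unfolding LE_def
proof (intro ballI ext)
  fix k l X assume k: "k \<in> {1..n}" and l: "l \<in> {1..n}"
  let ?J = "set js"
  show "lin n (Lmult n (BLK ?J c A) (BLK ?J c' B) k l) X = lin n (BLK ?J (prodl c c') (Jprod js A B) k l) X"
  proof (cases "k \<in> ?J \<and> l \<in> ?J")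
    case True
    have t: "lin n (prodl (BLK ?J c A k m) (BLK ?J c' B m l)) X = (if m \<in> ?J then lin n (prodl (A k m) (B m l)) X else 0)" for m
    proof (cases "m \<in> ?J")
      case True then show ?thesis using \<open>k \<in> ?J \<and> l \<in> ?J\<close> by (simp add: BLK_def)
    next
      case False
      then have "k \<noteq> m" using \<open>k \<in> ?J \<and> l \<in> ?J\<close> by auto
      then show ?thesis using False by (simp add: BLK_def)
    qed
    have "lin n (Lmult n (BLK ?J c A) (BLK ?J c' B) k l) X = (\<Sum>m\<in>{1..n}. if m \<in> ?J then lin n (prodl (A k m) (B m l)) X else 0)"
      by (simp add: lin_Lmult t cong: if_cong)
    also have "\<dots> = (\<Sum>m\<in>?J. lin n (prodl (A k m) (B m l)) X)"
      using assms(1) by (simp add: sum.If_cases Int_absorb1)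
    also have "\<dots> = lin n (Jprod js A B k l) X"
      using assms(2) by (simp add: Jprod_def lin_concat sum_list_distinct_conv_sum_set)
    moreover have "BLK ?J (prodl c c') (Jprod js A B) k l = Jprod js A B k l"
      using True by (simp add: BLK_def)
    ultimately show ?thesis by simp
  next
    case False
    have t: "lin n (prodl (BLK ?J c A k m) (BLK ?J c' B m l)) X = (if m = k then (if k = l then lin n (prodl c c') X else 0) else 0)" for m
    proof (cases "m = k")
      case True
      show ?thesis
      proof (cases "k \<in> ?J")
        case True
        then have "l \<notin> ?J" "k \<noteq> l" using \<open>\<not> (k \<in> ?J \<and> l \<in> ?J)\<close> by auto
        then show ?thesis using True \<open>m = k\<close> by (simp add: BLK_def)
      next
        case False
        then show ?thesis using \<open>m = k\<close> by (simp add: BLK_def)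
      qed
    next
      case False
      show ?thesis
      proof (cases "m \<in> ?J")
        case True
        show ?thesis
        proof (cases "k \<in> ?J")
          case True
          then have "l \<notin> ?J" using \<open>\<not> (k \<in> ?J \<and> l \<in> ?J)\<close> by auto
          then have "m \<noteq> l" using \<open>m \<in> ?J\<close> by auto
          then show ?thesis using \<open>m \<noteq> k\<close> \<open>l \<notin> ?J\<close> by (simp add: BLK_def)
        next
          case False
          then show ?thesis using \<open>m \<noteq> k\<close> by (simp add: BLK_def)
        qed
      next
        case False
        then show ?thesis using \<open>m \<noteq> k\<close> by (simp add: BLK_def)
      qed
    qed
    have "lin n (Lmult n (BLK ?J c A) (BLK ?J c' B) k l) X = (\<Sum>m\<in>{1..n}. if m = k then (if k = l then lin n (prodl c c') X else 0) else 0)"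
      by (simp only: lin_Lmult t)
    also have "\<dots> = (if k = l then lin n (prodl c c') X else 0)"
      using k by (simp add: sum.delta')
    moreover have "BLK ?J (prodl c c') (Jprod js A B) k l = (if k = l then prodl c c' else [])"
      using False unfolding BLK_def by auto
    ultimately show ?thesis by simp
  qed
qed

lemma BLK_LE:
  assumes "lin n c = lin n c'" "\<forall>k\<in>J. \<forall>l\<in>J. lin n (A k l) = lin n (A' k l)"
  shows "LE n (BLK J c A) (BLK J c' A')"
  using assms unfolding LE_def BLK_def by auto

lemma ONE_BLK: "ONE = BLK J [(1, [])] ONE"
  by (auto simp: fun_eq_iff BLK_def ONE_def)

lemma DL_out: "\<not> (k \<in> {i, i+1} \<and> l \<in> {i, i+1}) \<Longrightarrow> DL i k l = (if k = l then [(1, [])] else [])"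
  unfolding DL_def by (cases "k = l") auto

lemma DIL_out: "\<not> (k \<in> {i, i+1} \<and> l \<in> {i, i+1}) \<Longrightarrow> DIL i k l = (if k = l then [(1, [])] else [])"
  unfolding DIL_def by (cases "k = l") auto

lemma PL_BLK: "{i, i+1} \<subseteq> J \<Longrightarrow> PL (BS i, b) = BLK J [(1, [(BS i, b)])] (PL (BS i, b))"
proof (intro ext)
  fix k l assume J: "{i, i+1} \<subseteq> J"
  show "PL (BS i, b) k l = BLK J [(1, [(BS i, b)])] (PL (BS i, b)) k l"
  proof (cases "k \<in> J \<and> l \<in> J")
    case True then show ?thesis by (simp add: BLK_def)
  next
    case False
    then have o: "\<not> (k \<in> {i, i+1} \<and> l \<in> {i, i+1})" using J by blast
    have d1: "DL i k l = (if k = l then [(1, [])] else [])" by (rule DL_out[OF o])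
    have d2: "DIL i k l = (if k = l then [(1, [])] else [])" by (rule DIL_out[OF o])
    show ?thesis using False
      by (cases b) (simp_all only: PL.simps d1 d2 BLK_def if_False, auto)
  qed
qed

lemma PW2: "LE n (PW n [x, y]) (Lmult n (PL x) (PL y))"
  using Lmult_cong[OF LE_refl Lmult_one2] by simp

lemma PW3: "LE n (PW n [x, y, z]) (Lmult n (PL x) (Lmult n (PL y) (PL z)))"
  using Lmult_cong[OF LE_refl Lmult_cong[OF LE_refl Lmult_one2]] by simp

lemmas nf_simps = cnt_def nf_def pushw1_def pushP_def pushN_def


lemma ball_ins: "(\<forall>x\<in>insert a B. Q x) \<longleftrightarrow> Q a \<and> (\<forall>x\<in>B. Q x)" by auto
lemma ball_emp: "(\<forall>x\<in>{}. Q x) \<longleftrightarrow> True" by auto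

lemma triple_BLK:
  assumes js: "set js \<subseteq> {1..n}" "distinct js" and sub: "{i, i+1} \<subseteq> set js" "{j, j+1} \<subseteq> set js" "{k, k+1} \<subseteq> set js"
  shows "LE n (PW n [(BS i, b1), (BS j, b2), (BS k, b3)])
    (BLK (set js) (prodl [(1, [(BS i, b1)])] (prodl [(1, [(BS j, b2)])] [(1, [(BS k, b3)])]))
      (Jprod js (PL (BS i, b1)) (Jprod js (PL (BS j, b2)) (PL (BS k, b3)))))"
proof -
  have "LE n (PW n [(BS i, b1), (BS j, b2), (BS k, b3)]) (Lmult n (PL (BS i, b1)) (Lmult n (PL (BS j, b2)) (PL (BS k, b3))))"
    by (rule PW3)
  also have "LE n \<dots> (Lmult n (BLK (set js) [(1, [(BS i, b1)])] (PL (BS i, b1)))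
     (BLK (set js) (prodl [(1, [(BS j, b2)])] [(1, [(BS k, b3)])]) (Jprod js (PL (BS j, b2)) (PL (BS k, b3)))))"
    using Lmult_cong[OF LE_refl BLK_mult[OF js, of "[(1, [(BS j, b2)])]" "PL (BS j, b2)" "[(1, [(BS k, b3)])]" "PL (BS k, b3)"]]
      PL_BLK[OF sub(1), of b1] PL_BLK[OF sub(2), of b2] PL_BLK[OF sub(3), of b3] by simp
  also have "LE n \<dots> (BLK (set js) (prodl [(1, [(BS i, b1)])] (prodl [(1, [(BS j, b2)])] [(1, [(BS k, b3)])]))
      (Jprod js (PL (BS i, b1)) (Jprod js (PL (BS j, b2)) (PL (BS k, b3)))))"
    by (rule BLK_mult[OF js])
  finally show ?thesis .
qed

lemma braid_LE:
  assumes "1 \<le> i" "i + 1 < n"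
  shows "LE n (PW n [P (BS i), P (BS (i+1)), P (BS i)]) (PW n [P (BS (i+1)), P (BS i), P (BS (i+1))])"
proof -
  let ?js = "[i, i+1, i+2]"
  have js: "set ?js \<subseteq> {1..n}" "distinct ?js" using assms by auto
  have a: "Suc 0 \<le> i" "i \<le> n" "Suc i \<le> n" "i < n" "Suc i < n" "Suc (Suc i) \<le> n" using assms by auto
  have L: "LE n (PW n [P (BS i), P (BS (i+1)), P (BS i)])
    (BLK (set ?js) (prodl [(1, [P (BS i)])] (prodl [(1, [P (BS (i+1))])] [(1, [P (BS i)])]))
      (Jprod ?js (PL (P (BS i))) (Jprod ?js (PL (P (BS (i+1)))) (PL (P (BS i))))))"
    by (rule triple_BLK[OF js]) auto
  have R: "LE n (PW n [P (BS (i+1)), P (BS i), P (BS (i+1))])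
    (BLK (set ?js) (prodl [(1, [P (BS (i+1))])] (prodl [(1, [P (BS i)])] [(1, [P (BS (i+1))])]))
      (Jprod ?js (PL (P (BS (i+1)))) (Jprod ?js (PL (P (BS i))) (PL (P (BS (i+1)))))))"
    by (rule triple_BLK[OF js]) auto
  have M: "LE n (BLK (set ?js) (prodl [(1, [P (BS i)])] (prodl [(1, [P (BS (i+1))])] [(1, [P (BS i)])]))
      (Jprod ?js (PL (P (BS i))) (Jprod ?js (PL (P (BS (i+1)))) (PL (P (BS i))))))
    (BLK (set ?js) (prodl [(1, [P (BS (i+1))])] (prodl [(1, [P (BS i)])] [(1, [P (BS (i+1))])]))
      (Jprod ?js (PL (P (BS (i+1)))) (Jprod ?js (PL (P (BS i))) (PL (P (BS (i+1)))))))"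
  proof (rule BLK_LE)
    show "lin n (prodl [(1, [P (BS i)])] (prodl [(1, [P (BS (i+1))])] [(1, [P (BS i)])]))
      = lin n (prodl [(1, [P (BS (i+1))])] (prodl [(1, [P (BS i)])] [(1, [P (BS (i+1))])]))"
      by (rule lin_eqI) (simp_all add: alph_iff nf_simps fun_eq_iff a)
    show "\<forall>k\<in>set ?js. \<forall>l\<in>set ?js. lin n (Jprod ?js (PL (P (BS i))) (Jprod ?js (PL (P (BS (i+1)))) (PL (P (BS i)))) k l)
      = lin n (Jprod ?js (PL (P (BS (i+1)))) (Jprod ?js (PL (P (BS i))) (PL (P (BS (i+1))))) k l)"
      apply (simp only: list.set ball_ins ball_emp simp_thms)
      apply (intro conjI; rule lin_eqI; simp add: Jprod_def DL_def DIL_def alph_iff nf_simps fun_eq_iff a)+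
      done
  qed
  show ?thesis using LE_trans[OF L LE_trans[OF M LE_sym[OF R]]] .
qed

lemma cancel_LE:
  assumes "1 \<le> i" "i < n"
  shows "LE n (PW n [(BS i, b), (BS i, \<not> b)]) ONE"
proof -
  let ?js = "[i, i+1]"
  have js: "set ?js \<subseteq> {1..n}" "distinct ?js" using assms by auto
  have a: "Suc 0 \<le> i" "i \<le> n" "Suc i \<le> n" "i < n" using assms by auto
  have "LE n (PW n [(BS i, b), (BS i, \<not> b)]) (Lmult n (PL (BS i, b)) (PL (BS i, \<not> b)))" by (rule PW2)
  also have "LE n \<dots> (BLK (set ?js) (prodl [(1, [(BS i, b)])] [(1, [(BS i, \<not> b)])]) (Jprod ?js (PL (BS i, b)) (PL (BS i, \<not> b))))"
    using BLK_mult[OF js, of "[(1, [(BS i, b)])]" "PL (BS i, b)" "[(1, [(BS i, \<not> b)])]" "PL (BS i, \<not> b)"]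
      PL_BLK[of i "set ?js" b] PL_BLK[of i "set ?js" "\<not> b"] by simp
  also have "LE n \<dots> (BLK (set ?js) [(1, [])] ONE)"
  proof (rule BLK_LE)
    show "lin n (prodl [(1, [(BS i, b)])] [(1, [(BS i, \<not> b)])]) = lin n [(1, [])]"
      by (rule lin_eqI) (simp_all add: alph_iff nf_simps fun_eq_iff a)
    show "\<forall>k\<in>set ?js. \<forall>l\<in>set ?js. lin n (Jprod ?js (PL (BS i, b)) (PL (BS i, \<not> b)) k l) = lin n (ONE k l)"
      apply (cases b)
      apply (simp_all only: list.set ball_ins ball_emp simp_thms)
      apply (intro conjI; rule lin_eqI; simp add: Jprod_def DL_def DIL_def ONE_def alph_iff nf_simps fun_eq_iff a)+
      done
  qed
  finally show ?thesis using ONE_BLK[symmetric] by simp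
qed


lemma pair_BLK:
  assumes js: "set js \<subseteq> {1..n}" "distinct js" and sub: "{i, i+1} \<subseteq> set js" "{j, j+1} \<subseteq> set js"
  shows "LE n (PW n [(BS i, b1), (BS j, b2)])
    (BLK (set js) (prodl [(1, [(BS i, b1)])] [(1, [(BS j, b2)])]) (Jprod js (PL (BS i, b1)) (PL (BS j, b2))))"
proof -
  have "LE n (PW n [(BS i, b1), (BS j, b2)]) (Lmult n (PL (BS i, b1)) (PL (BS j, b2)))" by (rule PW2)
  also have "LE n \<dots> (BLK (set js) (prodl [(1, [(BS i, b1)])] [(1, [(BS j, b2)])]) (Jprod js (PL (BS i, b1)) (PL (BS j, b2))))"
    using BLK_mult[OF js, of "[(1, [(BS i, b1)])]" "PL (BS i, b1)" "[(1, [(BS j, b2)])]" "PL (BS j, b2)"]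
      PL_BLK[OF sub(1), of b1] PL_BLK[OF sub(2), of b2] by simp
  finally show ?thesis .
qed

lemma comm_LE:
  assumes "1 \<le> i" "i + 1 < j" "j < n"
  shows "LE n (PW n [P (BS i), P (BS j)]) (PW n [P (BS j), P (BS i)])"
proof -
  let ?js = "[i, i+1, j, j+1]"
  have js: "set ?js \<subseteq> {1..n}" "distinct ?js" using assms by auto
  have a: "Suc 0 \<le> i" "i \<le> n" "Suc i \<le> n" "i < n" "Suc i < j" "j < n" "Suc j \<le> n" "Suc 0 \<le> j" "j \<le> n" "\<not> Suc j < i" "\<not> j < i" "i \<noteq> j" "j \<noteq> i" "j \<noteq> Suc i" "Suc i \<noteq> j"
    "Suc j \<noteq> i" "i \<noteq> Suc j" "Suc i \<noteq> Suc j" "Suc j \<noteq> Suc i"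
    using assms by auto
  have L: "LE n (PW n [P (BS i), P (BS j)])
    (BLK (set ?js) (prodl [(1, [P (BS i)])] [(1, [P (BS j)])]) (Jprod ?js (PL (P (BS i))) (PL (P (BS j)))))"
    by (rule pair_BLK[OF js]) auto
  have R: "LE n (PW n [P (BS j), P (BS i)])
    (BLK (set ?js) (prodl [(1, [P (BS j)])] [(1, [P (BS i)])]) (Jprod ?js (PL (P (BS j))) (PL (P (BS i)))))"
    by (rule pair_BLK[OF js]) auto
  have M: "LE n (BLK (set ?js) (prodl [(1, [P (BS i)])] [(1, [P (BS j)])]) (Jprod ?js (PL (P (BS i))) (PL (P (BS j)))))
    (BLK (set ?js) (prodl [(1, [P (BS j)])] [(1, [P (BS i)])]) (Jprod ?js (PL (P (BS j))) (PL (P (BS i)))))"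
  proof (rule BLK_LE)
    show "lin n (prodl [(1, [P (BS i)])] [(1, [P (BS j)])]) = lin n (prodl [(1, [P (BS j)])] [(1, [P (BS i)])])"
      by (rule lin_eqI) (simp_all add: alph_iff nf_simps fun_eq_iff a)
    show "\<forall>k\<in>set ?js. \<forall>l\<in>set ?js. lin n (Jprod ?js (PL (P (BS i))) (PL (P (BS j))) k l)
      = lin n (Jprod ?js (PL (P (BS j))) (PL (P (BS i))) k l)"
      apply (simp only: list.set ball_ins ball_emp simp_thms)
      apply (intro conjI; rule lin_eqI; simp add: Jprod_def DL_def DIL_def alph_iff nf_simps fun_eq_iff a)+
      done
  qed
  show ?thesis using LE_trans[OF L LE_trans[OF M LE_sym[OF R]]] .
qed

lemma PW_filter: "LE n (PW n w) (PW n (filter (\<lambda>x. is_BS (fst x)) w))"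
proof (induction w)
  case (Cons x w)
  obtain g b where x: "x = (g, b)" by (cases x)
  show ?case
  proof (cases g)
    case (BG j)
    then show ?thesis using LE_trans[OF Lmult_one1 Cons.IH] x by simp
  next
    case (BS i)
    then show ?thesis using Lmult_cong[OF LE_refl Cons.IH] x by simp
  qed
qed simp

lemma PW_filter_eq:
  assumes "filter (\<lambda>x. is_BS (fst x)) l = filter (\<lambda>x. is_BS (fst x)) r"
  shows "LE n (PW n l) (PW n r)"
proof -
  have 1: "LE n (PW n l) (PW n (filter (\<lambda>x. is_BS (fst x)) r))" using PW_filter[of n l] assms by simp
  show ?thesis using LE_trans[OF 1 LE_sym[OF PW_filter[of n r]]] .
qed

lemma rels_LE: "(l, r) \<in> rels n \<Longrightarrow> LE n (PW n l) (PW n r)"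
  unfolding rels_def
proof (elim UnE)
  assume "(l, r) \<in> {([(a, b), (a, \<not> b)], []) | a b. a \<in> alphabet n}"
  then obtain a b where ab: "l = [(a, b), (a, \<not> b)]" "r = []" "a \<in> alphabet n" by blast
  show ?thesis
  proof (cases a)
    case (BG j) then show ?thesis using ab by (intro PW_filter_eq) simp
  next
    case (BS i) then show ?thesis using ab cancel_LE[of i n b] by (simp add: alph_iff)
  qed
next
  assume "(l, r) \<in> {([P (BS i), P (BS j)], [P (BS j), P (BS i)]) | i j.
        1 \<le> i \<and> i < n \<and> 1 \<le> j \<and> j < n \<and> (i + 1 < j \<or> j + 1 < i)}"
  then obtain i j where ij: "l = [P (BS i), P (BS j)]" "r = [P (BS j), P (BS i)]"
    "1 \<le> i" "i < n" "1 \<le> j" "j < n" "i + 1 < j \<or> j + 1 < i" by blast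
  show ?thesis
  proof (cases "i + 1 < j")
    case True then show ?thesis using ij comm_LE[of i j n] by simp
  next
    case False then show ?thesis using ij LE_sym[OF comm_LE[of j i n]] by simp
  qed
next
  assume "(l, r) \<in> {([P (BS i), P (BS j), P (BS i)], [P (BS j), P (BS i), P (BS j)]) | i j.
        1 \<le> i \<and> i < n \<and> 1 \<le> j \<and> j < n \<and> (i + 1 = j \<or> j + 1 = i)}"
  then obtain i j where ij: "l = [P (BS i), P (BS j), P (BS i)]" "r = [P (BS j), P (BS i), P (BS j)]"
    "1 \<le> i" "i < n" "1 \<le> j" "j < n" "i + 1 = j \<or> j + 1 = i" by blast
  show ?thesis
  proof (cases "i + 1 = j")
    case True then show ?thesis using ij braid_LE[of i n] by auto
  next
    case False then have "j + 1 = i" using ij by auto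
    then show ?thesis using ij LE_sym[OF braid_LE[of j n]] by auto
  qed
qed (auto intro: PW_filter_eq)

lemma PW_eqv: "eqv n u w \<Longrightarrow> LE n (PW n u) (PW n w)"
proof (induction rule: eqv.induct)
  case (eqv_sym u w) show ?case using eqv_sym.IH by (rule LE_sym)
next
  case (eqv_trans u v w) show ?case using eqv_trans.IH by (rule LE_trans)
next
  case (eqv_rel l r a b)
  have "LE n (PW n (a @ l @ b)) (Lmult n (PW n a) (Lmult n (PW n l) (PW n b)))"
    using LE_trans[OF PW_app Lmult_cong[OF LE_refl PW_app]] .
  also have "LE n \<dots> (Lmult n (PW n a) (Lmult n (PW n r) (PW n b)))"
    by (intro Lmult_cong LE_refl rels_LE[OF eqv_rel])
  also have "LE n \<dots> (PW n (a @ r @ b))"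
    using LE_sym[OF LE_trans[OF PW_app Lmult_cong[OF LE_refl PW_app]]] .
  finally show ?case .
qed simp


lemma prodl_mem: "(c, u) \<in> set (prodl A B) \<Longrightarrow> \<exists>a u1 b u2. (a, u1) \<in> set A \<and> (b, u2) \<in> set B \<and> c = a * b \<and> u = u1 @ u2"
  unfolding prodl_def by auto

lemma DL_set: "set (DL i k m) \<subseteq> {(1, []), (1, [P (BG i)]), (-1, [P (BG i)])}"
  unfolding DL_def by (simp split: if_split) blast
lemma DIL_set: "set (DIL i k m) \<subseteq> {(1, []), (1, [N (BG i)]), (-1, [N (BG i)])}"
  unfolding DIL_def by (simp split: if_split) blast

lemma DL_mem: "(c, u) \<in> set (DL i k m) \<Longrightarrow> u = [] \<or> u = [P (BG i)]"
  using DL_set[of i k m] by blast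

lemma DIL_mem: "(c, u) \<in> set (DIL i k m) \<Longrightarrow> u = [] \<or> u = [N (BG i)]"
  using DIL_set[of i k m] by blast

lemma ONE_mem: "(c, u) \<in> set (ONE k m) \<Longrightarrow> u = []"
  unfolding ONE_def by (auto split: if_splits)

lemma PL_mem:
  assumes "fst x \<in> alphabet n" "(c, u) \<in> set (PL x k m)"
  shows "u \<in> words n \<and> perm_word u = perm_word [x]"
proof -
  obtain g b where x: "x = (g, b)" by (cases x)
  show ?thesis
  proof (cases g)
    case (BG j)
    then have "u = []" using assms(2) x ONE_mem[of c u k m] by simp
    then show ?thesis using BG x by simp
  next
    case (BS i)
    then have i: "1 \<le> i" "i < n" using assms x by (auto simp: alph_iff)
    show ?thesis
    proof (cases b)
      case True
      then obtain a u1 b' u2 where "(a, u1) \<in> set [(1, [P (BS i)])]" "(b', u2) \<in> set (DL i k m)" "u = u1 @ u2"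
        using assms(2) x BS prodl_mem by fastforce
      then show ?thesis using DL_mem[of b' u2 i k m] i x BS True by (auto simp: alph_iff)
    next
      case False
      then obtain a u1 b' u2 where "(a, u1) \<in> set (DIL i k m)" "(b', u2) \<in> set [(1, [N (BS i)])]" "u = u1 @ u2"
        using assms(2) x BS prodl_mem by fastforce
      then show ?thesis using DIL_mem[of a u1 i k m] i x BS False by (auto simp: alph_iff)
    qed
  qed
qed

lemma Lmult_mem: "(c, u) \<in> set (Lmult n A B k l) \<Longrightarrow>
  \<exists>m a u1 b u2. (a, u1) \<in> set (A k m) \<and> (b, u2) \<in> set (B m l) \<and> u = u1 @ u2"
  unfolding Lmult_def prodl_def by (clarsimp; blast)

lemma PW_mem: "w \<in> words n \<Longrightarrow> (c, u) \<in> set (PW n w k l) \<Longrightarrow> u \<in> words n \<and> perm_word u = perm_word w"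
proof (induction w arbitrary: c u k l)
  case Nil
  then have "u = []" using ONE_mem[of c u k l] by simp
  then show ?case by simp
next
  case (Cons x w)
  obtain m a u1 b u2 where mem: "(a, u1) \<in> set (PL x k m)" "(b, u2) \<in> set (PW n w m l)" "u = u1 @ u2"
    using Lmult_mem[of c u n "PL x" "PW n w" k l] Cons.prems by auto
  have 1: "u1 \<in> words n \<and> perm_word u1 = perm_word [x]" using PL_mem[OF _ mem(1)] Cons.prems by auto
  have 2: "u2 \<in> words n \<and> perm_word u2 = perm_word w" using Cons.IH[OF _ mem(2)] Cons.prems by auto
  have "perm_word (x # w) = perm_word [x] \<circ> perm_word w" using perm_word_app[of "[x]" w] by simp
  then show ?case using 1 2 mem(3) by (simp add: perm_word_app)
qed

lemma phi_rep:
  assumes "\<beta> \<in> Pn n"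
  obtains w where "w \<in> words n" "isBSw w" "perm_word w = id" "\<beta> = cls n w" "phi n \<beta> = linm n (PW n w)"
proof -
  obtain w0 where w0: "w0 \<in> words n" "isBSw w0" "perm_word w0 = id" "\<beta> = cls n w0"
    using assms unfolding Pn_def by blast
  define w where "w = (SOME w. w \<in> \<beta> \<and> w \<in> words n \<and> (\<forall>x \<in> set w. is_BS (fst x)))"
  have "w \<in> \<beta> \<and> w \<in> words n \<and> (\<forall>x \<in> set w. is_BS (fst x))"
    unfolding w_def by (rule someI[of _ w0]) (use w0 cls_mem in auto)
  then have w: "w \<in> words n" "isBSw w" "eqv n w w0" using w0(4) unfolding cls_def by auto
  have "perm_word w = id" using eqv_perm[OF w(3)] w0(3) by simp
  moreover have "\<beta> = cls n w" using w(3) w0(4) cls_eq_iff by blast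
  moreover have "phi n \<beta> = linm n (PW n w)" unfolding phi_def w_def[symmetric] by (rule phi_word_linm)
  ultimately show ?thesis using that w by blast
qed

lemma part2: "\<beta> \<in> Pn n \<Longrightarrow> k \<in> {1..n} \<Longrightarrow> l \<in> {1..n} \<Longrightarrow> in_ZFP n (phi n \<beta> k l)"
proof -
  assume b: "\<beta> \<in> Pn n"
  obtain w where w: "w \<in> words n" "perm_word w = id" "phi n \<beta> = linm n (PW n w)" using phi_rep[OF b] by blast
  have "supp (phi n \<beta> k l) \<subseteq> cls n ` snd ` set (PW n w k l)" using w(3) supp_lin by (simp add: linm_def)
  also have "\<dots> \<subseteq> FP n" unfolding FP_char using PW_mem[OF w(1)] w(2) by fastforce
  finally show "in_ZFP n (phi n \<beta> k l)" unfolding in_ZFP_def using w(3) finite_supp_lin by (simp add: linm_def)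
qed


lemma mat_entry_mult:
  assumes "A \<in> carrier_mat k k" "B \<in> carrier_mat k k" "p < k" "q < k"
  shows "(A * B) $$ (p, q) = (\<Sum>e<k. A $$ (p, e) * B $$ (e, q))"
  using assms by (simp add: scalar_prod_def atLeast0LessThan)

lemma hom_facts:
  assumes hr: "r \<in> hom (FPgroup n) (GL d)"
  shows "X \<in> FP n \<Longrightarrow> r X \<in> carrier_mat d d"
    and "X \<in> FP n \<Longrightarrow> invertible_mat (r X)"
    and "X \<in> FP n \<Longrightarrow> Y \<in> FP n \<Longrightarrow> r (X \<otimes>\<^bsub>FB n\<^esub> Y) = r X * r Y"
  using hr unfolding hom_def GL_def by (auto simp: FPgroup_carrier FPgroup_def)

lemma cls_nil_FP: "cls n [] \<in> FP n" unfolding FP_char by auto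

lemma r_one:
  assumes hr: "r \<in> hom (FPgroup n) (GL d)"
  shows "r (cls n []) = 1\<^sub>m d"
proof -
  let ?e = "cls n []"
  have c: "r ?e \<in> carrier_mat d d" "invertible_mat (r ?e)" using hom_facts[OF hr] cls_nil_FP by auto
  have m: "r ?e = r ?e * r ?e" using hom_facts(3)[OF hr cls_nil_FP cls_nil_FP] by (simp add: FB_mult)
  obtain B where B: "B \<in> carrier_mat d d" "r ?e * B = 1\<^sub>m d" "B * r ?e = 1\<^sub>m d"
    using c invertible_iff by blast
  have "r ?e = 1\<^sub>m d * r ?e" using c by simp
  also have "\<dots> = (B * r ?e) * r ?e" using B by simp
  also have "\<dots> = B * (r ?e * r ?e)" by (rule assoc_mult_mat) (use B c in auto)
  also have "\<dots> = 1\<^sub>m d" using m B by simp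
  finally show ?thesis .
qed

definition ev :: "(word set \<Rightarrow> complex mat) \<Rightarrow> nat \<Rightarrow> (int \<times> word) list \<Rightarrow> nat \<Rightarrow> nat \<Rightarrow> complex" where
  "ev r n L p q = sum_list (map (\<lambda>(c, w). of_int c * r (cls n w) $$ (p, q)) L)"

lemma ev_simps[simp]: "ev r n [] p q = 0" "ev r n ((c, w) # L) p q = of_int c * r (cls n w) $$ (p, q) + ev r n L p q"
  "ev r n (A @ B) p q = ev r n A p q + ev r n B p q"
  by (simp_all add: ev_def)

lemma ev_concat: "ev r n (concat (map F xs)) p q = sum_list (map (\<lambda>m. ev r n (F m) p q) xs)"
  by (induction xs) auto

lemma sum_lin_ext:
  assumes "finite S" "cls n ` snd ` set L \<subseteq> S"
  shows "(\<Sum>x\<in>S. of_int (lin n L x) * f x) = sum_list (map (\<lambda>(c, w). of_int c * f (cls n w)) L)"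
  using assms(2)
proof (induction L)
  case Nil then show ?case by simp
next
  case (Cons y L)
  obtain c w where y: "y = (c, w)" by (cases y)
  have w: "cls n w \<in> S" using Cons.prems y by auto
  have "(\<Sum>x\<in>S. of_int (lin n (y # L) x) * f x)
    = (\<Sum>x\<in>S. if cls n w = x then of_int c * f x else 0) + (\<Sum>x\<in>S. of_int (lin n L x) * f x)"
    unfolding sum.distrib[symmetric] y by (rule sum.cong) (auto simp: distrib_right)
  also have "(\<Sum>x\<in>S. if cls n w = x then of_int c * f x else 0) = of_int c * f (cls n w)"
    using w assms(1) by (simp add: sum.delta)
  finally show ?case using Cons y by simp
qed

lemma rho_lin_lin:
  assumes "p < d" "q < d"
  shows "rho_lin d r (lin n L) $$ (p, q) = ev r n L p q"
proof -
  let ?S = "cls n ` snd ` set L"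
  have "rho_lin d r (lin n L) $$ (p, q) = (\<Sum>x\<in>supp (lin n L). of_int (lin n L x) * r x $$ (p, q))"
    using assms by (simp add: rho_lin_def)
  also have "\<dots> = (\<Sum>x\<in>?S. of_int (lin n L x) * r x $$ (p, q))"
    by (rule sum.mono_neutral_left) (auto simp: supp_def intro: supp_lin[unfolded supp_def, THEN subsetD])
  also have "\<dots> = ev r n L p q" unfolding ev_def by (rule sum_lin_ext) auto
  finally show ?thesis .
qed

definition good :: "nat \<Rightarrow> (int \<times> word) list \<Rightarrow> bool" where
  "good n L \<longleftrightarrow> (\<forall>x \<in> set L. cls n (snd x) \<in> FP n)"

lemma sum_list_sum_swap: "(\<Sum>e\<in>S. sum_list (map (f e) xs)) = sum_list (map (\<lambda>x. \<Sum>e\<in>S. f e x) xs)"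
  by (induction xs) (auto simp: sum.distrib)

lemma ev_map:
  assumes hr: "r \<in> hom (FPgroup n) (GL d)" and u: "cls n u \<in> FP n" and B: "good n B" and pq: "p < d" "q < d"
  shows "ev r n (map (\<lambda>(b, v). (a * b, u @ v)) B) p q = (\<Sum>e<d. (of_int a * r (cls n u) $$ (p, e)) * ev r n B e q)"
  using B
proof (induction B)
  case Nil then show ?case by simp
next
  case (Cons y B)
  obtain b v where y: "y = (b, v)" by (cases y)
  have v: "cls n v \<in> FP n" using Cons.prems y by (auto simp: good_def)
  have IH: "ev r n (map (\<lambda>(b, v). (a * b, u @ v)) B) p q = (\<Sum>e<d. (of_int a * r (cls n u) $$ (p, e)) * ev r n B e q)"
    using Cons by (auto simp: good_def)
  have "r (cls n (u @ v)) $$ (p, q) = (\<Sum>e<d. r (cls n u) $$ (p, e) * r (cls n v) $$ (e, q))"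
    using hom_facts[OF hr] u v pq by (simp add: FB_mult[symmetric] mat_entry_mult)
  then have "of_int (a * b) * r (cls n (u @ v)) $$ (p, q)
    = (\<Sum>e<d. (of_int a * r (cls n u) $$ (p, e)) * (of_int b * r (cls n v) $$ (e, q)))"
    by (simp add: sum_distrib_left mult_ac)
  then show ?case using IH y by (simp add: sum.distrib distrib_left)
qed

lemma ev_prodl:
  assumes hr: "r \<in> hom (FPgroup n) (GL d)" and A: "good n A" and B: "good n B" and pq: "p < d" "q < d"
  shows "ev r n (prodl A B) p q = (\<Sum>e<d. ev r n A p e * ev r n B e q)"
  using A
proof (induction A)
  case Nil then show ?case by simp
next
  case (Cons y A)
  obtain a u where y: "y = (a, u)" by (cases y)
  have u: "cls n u \<in> FP n" using Cons.prems y by (auto simp: good_def)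
  have IH: "ev r n (prodl A B) p q = (\<Sum>e<d. ev r n A p e * ev r n B e q)"
    using Cons by (auto simp: good_def)
  show ?case using IH y ev_map[OF hr u B pq] by (simp add: sum.distrib distrib_right)
qed

definition Rm :: "(word set \<Rightarrow> complex mat) \<Rightarrow> nat \<Rightarrow> nat \<Rightarrow> gmat \<Rightarrow> complex mat" where
  "Rm r n d M = mat (n * d) (n * d) (\<lambda>(a, b). rho_lin d r (M (a div d + 1) (b div d + 1)) $$ (a mod d, b mod d))"

lemma rho_plus_Rm: "rho_plus n d r \<beta> = Rm r n d (phi n \<beta>)"
  by (simp add: rho_plus_def Rm_def)

lemma idx: "(a::nat) < n * d \<Longrightarrow> a div d + 1 \<in> {1..n} \<and> a mod d < d"
  by (cases "d = 0") (auto simp: less_mult_imp_div_less Suc_le_eq)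

lemma Rm_lin: "a < n * d \<Longrightarrow> b < n * d \<Longrightarrow>
  Rm r n d (linm n A) $$ (a, b) = ev r n (A (a div d + 1) (b div d + 1)) (a mod d) (b mod d)"
  using idx[of a n d] idx[of b n d] by (simp add: Rm_def linm_def rho_lin_lin)

lemma Rm_LE: "LE n A B \<Longrightarrow> Rm r n d (linm n A) = Rm r n d (linm n B)"
  unfolding Rm_def linm_def LE_def by (rule eq_matI) (use idx in auto)

lemma reindex:
  fixes n d :: nat and g :: "nat \<Rightarrow> nat \<Rightarrow> 'a :: comm_monoid_add"
  shows "(\<Sum>c<n * d. g (c div d) (c mod d)) = (\<Sum>m<n. \<Sum>e<d. g m e)"
proof -
  have bij: "bij_betw (\<lambda>(m, e). m * d + e) ({..<n} \<times> {..<d}) {..<n * d}"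
  proof (rule bij_betw_byWitness[where f'="\<lambda>c. (c div d, c mod d)"])
    show "\<forall>a\<in>{..<n} \<times> {..<d}. (\<lambda>c. (c div d, c mod d)) (case a of (m, e) \<Rightarrow> m * d + e) = a"
      by auto
    show "\<forall>a'\<in>{..<n * d}. (case (a' div d, a' mod d) of (m, e) \<Rightarrow> m * d + e) = a'"
      by simp
    show "(\<lambda>(m, e). m * d + e) ` ({..<n} \<times> {..<d}) \<subseteq> {..<n * d}"
    proof -
      have "m * d + e < n * d" if "m < n" "e < d" for m e
      proof -
        have "m * d + e < (m + 1) * d" using that by simp
        also have "\<dots> \<le> n * d" using \<open>m < n\<close> by (intro mult_le_mono1) simp
        finally show ?thesis .
      qed
      then show ?thesis by auto
    qed
    show "(\<lambda>c. (c div d, c mod d)) ` {..<n * d} \<subseteq> {..<n} \<times> {..<d}"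
      using idx by (force simp: Suc_le_eq)
  qed
  have "(\<Sum>c<n * d. g (c div d) (c mod d)) = (\<Sum>x\<in>{..<n} \<times> {..<d}.
      g ((case x of (m, e) \<Rightarrow> m * d + e) div d) ((case x of (m, e) \<Rightarrow> m * d + e) mod d))"
    by (rule sum.reindex_bij_betw[OF bij, symmetric])
  also have "\<dots> = (\<Sum>x\<in>{..<n} \<times> {..<d}. g (fst x) (snd x))" by (rule sum.cong) auto
  also have "\<dots> = (\<Sum>m<n. \<Sum>e<d. g m e)"
    by (simp add: sum.cartesian_product case_prod_beta)
  finally show ?thesis .
qed


lemma Rm_carrier: "Rm r n d M \<in> carrier_mat (n * d) (n * d)" by (simp add: Rm_def)

lemma Rm_mult:
  assumes hr: "r \<in> hom (FPgroup n) (GL d)" and A: "\<forall>k l. good n (A k l)" and B: "\<forall>k l. good n (B k l)"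
  shows "Rm r n d (linm n (Lmult n A B)) = Rm r n d (linm n A) * Rm r n d (linm n B)"
proof (rule eq_matI)
  fix a b assume ab: "a < dim_row (Rm r n d (linm n A) * Rm r n d (linm n B))"
    "b < dim_col (Rm r n d (linm n A) * Rm r n d (linm n B))"
  then have ab': "a < n * d" "b < n * d" by (simp_all add: Rm_def)
  define k where "k = a div d + 1"
  define l where "l = b div d + 1"
  define p where "p = a mod d"
  define q where "q = b mod d"
  have pq: "p < d" "q < d" using idx[OF ab'(1)] idx[OF ab'(2)] by (auto simp: p_def q_def)
  have "(Rm r n d (linm n A) * Rm r n d (linm n B)) $$ (a, b)
    = (\<Sum>c<n * d. Rm r n d (linm n A) $$ (a, c) * Rm r n d (linm n B) $$ (c, b))"
    by (rule mat_entry_mult[OF Rm_carrier Rm_carrier ab'])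
  also have "\<dots> = (\<Sum>c<n * d. ev r n (A k (c div d + 1)) p (c mod d) * ev r n (B (c div d + 1) l) (c mod d) q)"
    by (rule sum.cong) (auto simp: Rm_lin ab' k_def l_def p_def q_def)
  also have "\<dots> = (\<Sum>m<n. \<Sum>e<d. ev r n (A k (m + 1)) p e * ev r n (B (m + 1) l) e q)"
    by (rule reindex[where g="\<lambda>m e. ev r n (A k (m + 1)) p e * ev r n (B (m + 1) l) e q"])
  also have "\<dots> = (\<Sum>m\<in>{Suc 0..n}. \<Sum>e<d. ev r n (A k m) p e * ev r n (B m l) e q)"
    by (simp add: sum.atLeast1_atMost_eq)
  also have "\<dots> = (\<Sum>m\<in>{Suc 0..n}. ev r n (prodl (A k m) (B m l)) p q)"
    using ev_prodl[OF hr _ _ pq] A B by simp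
  also have "\<dots> = ev r n (Lmult n A B k l) p q"
    by (simp add: Lmult_def ev_concat sum_list_upts)
  also have "\<dots> = Rm r n d (linm n (Lmult n A B)) $$ (a, b)"
    by (simp add: Rm_lin ab' k_def l_def p_def q_def)
  finally show "Rm r n d (linm n (Lmult n A B)) $$ (a, b) = (Rm r n d (linm n A) * Rm r n d (linm n B)) $$ (a, b)" by simp
qed (simp_all add: Rm_def)

lemma div_mod_eq_iff: "(a::nat) = b \<longleftrightarrow> a div d = b div d \<and> a mod d = b mod d"
  by (metis div_mult_mod_eq)

lemma Rm_ONE:
  assumes hr: "r \<in> hom (FPgroup n) (GL d)"
  shows "Rm r n d (linm n ONE) = 1\<^sub>m (n * d)"
proof (rule eq_matI)
  fix a b assume "a < dim_row (1\<^sub>m (n * d))" "b < dim_col (1\<^sub>m (n * d))"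
  then have ab: "a < n * d" "b < n * d" by simp_all
  have pq: "a mod d < d" "b mod d < d" using idx[OF ab(1)] idx[OF ab(2)] by auto
  show "Rm r n d (linm n ONE) $$ (a, b) = 1\<^sub>m (n * d) $$ (a, b)"
    using ab pq r_one[OF hr] div_mod_eq_iff[of a b d] by (auto simp: Rm_lin ONE_def)
qed (simp_all add: Rm_def)

lemma good_PW: "w \<in> words n \<Longrightarrow> perm_word w = id \<Longrightarrow> good n (PW n w k l)"
  unfolding good_def FP_char using PW_mem by fastforce

lemma Pn_mult:
  assumes "\<beta>1 \<in> Pn n" "\<beta>2 \<in> Pn n" shows "\<beta>1 \<otimes>\<^bsub>FB n\<^esub> \<beta>2 \<in> Pn n"
proof -
  obtain x where x: "x \<in> words n" "isBSw x" "perm_word x = id" "\<beta>1 = cls n x" using assms(1) unfolding Pn_def by blast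
  obtain y where y: "y \<in> words n" "isBSw y" "perm_word y = id" "\<beta>2 = cls n y" using assms(2) unfolding Pn_def by blast
  show ?thesis unfolding Pn_def
    by (rule image_eqI[where x="x @ y"]) (use x y in \<open>auto simp: FB_mult perm_word_app\<close>)
qed

lemma rp_mult:
  assumes hr: "r \<in> hom (FPgroup n) (GL d)" and b: "\<beta>1 \<in> Pn n" "\<beta>2 \<in> Pn n"
  shows "rho_plus n d r (\<beta>1 \<otimes>\<^bsub>FB n\<^esub> \<beta>2) = rho_plus n d r \<beta>1 * rho_plus n d r \<beta>2"
proof -
  obtain w1 where w1: "w1 \<in> words n" "isBSw w1" "perm_word w1 = id" "\<beta>1 = cls n w1" "phi n \<beta>1 = linm n (PW n w1)"
    using phi_rep[OF b(1)] by blast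
  obtain w2 where w2: "w2 \<in> words n" "isBSw w2" "perm_word w2 = id" "\<beta>2 = cls n w2" "phi n \<beta>2 = linm n (PW n w2)"
    using phi_rep[OF b(2)] by blast
  obtain w where w: "w \<in> words n" "\<beta>1 \<otimes>\<^bsub>FB n\<^esub> \<beta>2 = cls n w" "phi n (\<beta>1 \<otimes>\<^bsub>FB n\<^esub> \<beta>2) = linm n (PW n w)"
    using phi_rep[OF Pn_mult[OF b]] by blast
  have "cls n w = cls n (w1 @ w2)" using w(2) w1(4) w2(4) by (simp add: FB_mult)
  then have "eqv n w (w1 @ w2)" using cls_eq_iff by blast
  then have le: "LE n (PW n w) (Lmult n (PW n w1) (PW n w2))"
    using LE_trans[OF PW_eqv PW_app] by blast
  have "rho_plus n d r (\<beta>1 \<otimes>\<^bsub>FB n\<^esub> \<beta>2) = Rm r n d (linm n (Lmult n (PW n w1) (PW n w2)))"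
    using Rm_LE[OF le] w(3) by (simp add: rho_plus_Rm)
  also have "\<dots> = Rm r n d (linm n (PW n w1)) * Rm r n d (linm n (PW n w2))"
    using Rm_mult[OF hr] good_PW w1 w2 by blast
  finally show ?thesis using w1 w2 by (simp add: rho_plus_Rm)
qed

lemma rp_one:
  assumes hr: "r \<in> hom (FPgroup n) (GL d)"
  shows "rho_plus n d r (cls n []) = 1\<^sub>m (n * d)"
proof -
  have "cls n [] \<in> Pn n" unfolding Pn_def by auto
  then obtain w where w: "w \<in> words n" "cls n [] = cls n w" "phi n (cls n []) = linm n (PW n w)"
    using phi_rep by metis
  have "LE n (PW n w) (PW n [])" using PW_eqv w(2) cls_eq_iff by (metis eqv_sym)
  then show ?thesis using Rm_LE w(3) Rm_ONE[OF hr] by (simp add: rho_plus_Rm)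
qed

lemma part3:
  assumes hr: "r \<in> hom (FPgroup n) (GL d)"
  shows "rho_plus n d r \<in> hom (Pgroup n) (GL (n * d))"
proof (rule homI)
  fix \<beta> assume "\<beta> \<in> carrier (Pgroup n)"
  then have b: "\<beta> \<in> Pn n" by (simp add: Pgroup_def)
  obtain w where w: "w \<in> words n" "isBSw w" "perm_word w = id" "\<beta> = cls n w"
    using phi_rep[OF b] by blast
  have pw: "perm_word (winv w) = id" using eqv_perm[OF winv_left[OF w(1)]] w(3) by (simp add: perm_word_app)
  have b': "cls n (winv w) \<in> Pn n" unfolding Pn_def using w pw by auto
  have 1: "\<beta> \<otimes>\<^bsub>FB n\<^esub> cls n (winv w) = cls n []" using w winv_right[OF w(1)] by (simp add: FB_mult cls_eq_iff)
  have 2: "cls n (winv w) \<otimes>\<^bsub>FB n\<^esub> \<beta> = cls n []" using w winv_left[OF w(1)] by (simp add: FB_mult cls_eq_iff)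
  have "rho_plus n d r \<beta> * rho_plus n d r (cls n (winv w)) = 1\<^sub>m (n * d)"
    using rp_mult[OF hr b b'] 1 rp_one[OF hr] by simp
  moreover have "rho_plus n d r (cls n (winv w)) * rho_plus n d r \<beta> = 1\<^sub>m (n * d)"
    using rp_mult[OF hr b' b] 2 rp_one[OF hr] by simp
  moreover have c: "rho_plus n d r \<beta> \<in> carrier_mat (n * d) (n * d)" "rho_plus n d r (cls n (winv w)) \<in> carrier_mat (n * d) (n * d)"
    by (simp_all add: rho_plus_Rm Rm_carrier)
  ultimately have "invertible_mat (rho_plus n d r \<beta>)" using invertible_iff[OF c(1)] c(2) by blast
  then show "rho_plus n d r \<beta> \<in> carrier (GL (n * d))" using c by (simp add: GL_def)
next
  fix x y assume "x \<in> carrier (Pgroup n)" "y \<in> carrier (Pgroup n)"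
  then show "rho_plus n d r (x \<otimes>\<^bsub>Pgroup n\<^esub> y) = rho_plus n d r x \<otimes>\<^bsub>GL (n * d)\<^esub> rho_plus n d r y"
    using rp_mult[OF hr] by (simp add: Pgroup_def GL_def)
qed

theorem theorem4p1:
  fixes n d :: nat and \<rho> :: "word set \<Rightarrow> complex mat" and t :: "nat \<Rightarrow> complex"
  assumes "n \<ge> 2"
    and "\<forall>i \<in> {1..n}. t i \<noteq> 0"
    and "\<rho> \<in> hom (FPgroup n) (GL d)"
  shows "(\<exists>\<rho>t. twisted n d \<rho> t \<rho>t)
    \<and> (\<forall>\<beta> \<in> Pn n. \<forall>k \<in> {1..n}. \<forall>l \<in> {1..n}. in_ZFP n (phi n \<beta> k l))
    \<and> (\<forall>\<rho>t. twisted n d \<rho> t \<rho>t \<longrightarrow> rho_plus n d \<rho>t \<in> hom (Pgroup n) (GL (n * d)))"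
  using part1[OF assms(2,3)] part2 part3 unfolding twisted_def by blast


end
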